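(* Assume $E$ is countable. For every family $(\gamma_x)_{x\in S}$ where each $\gamma_x$ is a proper oriented kernel on the time box $\{x\}$, there exists a unique POS $\gamma=(\gamma_\Delta)_{\Delta\in\mathcal T_b}$ such that $\gamma_{\{x\}}=\gamma_x$ for all $x\in S$. Moreover $$\mathcal G(\gamma)=\bigl\{\mu\text{ probability measure on }(\Omega,\mathcal F):\ \mu\gamma_x=\mu\text{ on }\mathcal F_{S\setminus x_+}\text{ for all }x\in S\bigr\}.$$
   Context: $(S,\le)$ is a countable partially ordered set. For $x\in S$ write $x_-=\{y\in S:y<x\}$, $x_+=\{y\in S:y>x\}$. For $\Upsilon\subset S$: $\max(\Upsilon)=\{x\in\Upsilon: y\notin\Upsilon\text{ for all }y>x\}$, $\min(\Upsilon)=\{x\in\Upsilon: y\notin\Upsilon\text{ for all }y<x\}$, the past $\Upsilon_-=\{x\in S\setminus\Upsilon:\exists y\in\Upsilon,\ x<y\}$, the future $\Upsilon_+=\{x\in S\setminus\Upsilon:\exists y\in\Upsilon,\ x>y\}$, and the outer time $\Upsilon^*=\{x\in S: x\text{ is comparable with no }y\in\Upsilon\}$. Standing assumptions: for every $x\in S$, $\max(x_-)$ and $\min(x_+)$ are finite, every $y<x$ satisfies $y\le y_0<x$ for some $y_0\in\max(x_-)$, every $z>x$ satisfies $z\ge z_0>x$ for some $z_0\in\min(x_+)$; and $S$ has no minimal element. A finite set $\Lambda\subset S$ is a time box if $\Lambda_-\cap\Lambda_+=\emptyset$; $\mathcal T_b$ denotes the set of time boxes (every singleton is one). $(E,\mathcal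 E)$ is a measurable space (colors), $\Omega=E^S$ with the product $\sigma$-algebra $\mathcal F$; for $\Upsilon\subset S$, $\mathcal F_\Upsilon$ is the $\sigma$-algebra generated by the coordinates in $\Upsilon$. A proper oriented kernel on $\Lambda\in\mathcal T_b$ is a map $\gamma_\Lambda:\mathcal F_{S\setminus\Lambda_+}\times\Omega\to[0,1]$ such that (a) $\gamma_\Lambda(\cdot,\omega)$ is a probability measure for each $\omega$; (b) $\gamma_\Lambda(A,\cdot)$ is $\mathcal F_{\Lambda_-\cup\Lambda^*}$-measurable for each $A\in\mathcal F_{S\setminus\Lambda_+}$; (c) $\gamma_\Lambda(A,\cdot)$ is $\mathcal F_{\Lambda_-}$-measurable for each $A\in\mathcal F_\Lambda$; (d) $\gamma_\Lambda(B,\omega)=\mathbf 1_B(\omega)$ for all $B\in\mathcal F_{\Lambda_-\cup\Lambda^*}$. Write $\gamma_\Lambda(f\mid\omega)=\int f(\xi)\,\gamma_\Lambda(d\xi,\omega)$; compositions: $(\gamma_\Delta\gamma_\Lambda)(f\mid\omega)=\int\gamma_\Lambda(f\mid\sigma)\,\gamma_\Delta(d\sigma,\omega)$ and $(\mu\gamma_\Lambda)(f)=\int\gamma_\Lambda(f\mid\sigma)\,\mu(d\sigma)$. A partially oriented specification (POS) is a family $\gamma=(\gamma_\Lambda)_{\Lambda\in\mathcal T_b}$ of proper oriented kernels with $\gamma_\Delta\gamma_\Lambda=\gamma_\Delta$ on $\mathcal F_{S\setminus\Lambda_+}$ (for all bounded $\mathcal F_{S\setminus\Lambda_+}$-measurable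 $h$ and all $\omega$) whenever $\Lambda\subset\Delta$ are time boxes. A probability measure $\mu$ on $(\Omega,\mathcal F)$ is consistent with $\gamma$ if $\mu\gamma_\Lambda=\mu$ on $\mathcal F_{S\setminus\Lambda_+}$ for all $\Lambda\in\mathcal T_b$; $\mathcal G(\gamma)$ is the set of consistent measures. *)

theory Defs
  imports "HOL-Probability.Probability"
begin

text \<open>The time set S is the type 's (a partial order), the colour space is the
  measurable space ME whose carrier is the whole type 'e, and the configuration
  space Omega = E^S is the type 's => 'e (all functions).\<close>

definition maxs :: "'s::order set \<Rightarrow> 's set" where
  "maxs U = {x \<in> U. \<forall>y. x < y \<longrightarrow> y \<notin> U}"

definition mins :: "'s::order set \<Rightarrow> 's set" where
  "mins U = {x \<in> U. \<forall>y. y < x \<longrightarrow> y \<notin> U}"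

definition past :: "'s::order set \<Rightarrow> 's set" where
  "past U = {x. x \<notin> U \<and> (\<exists>y\<in>U. x < y)}"

definition fut :: "'s::order set \<Rightarrow> 's set" where
  "fut U = {x. x \<notin> U \<and> (\<exists>y\<in>U. y < x)}"

definition outer :: "'s::order set \<Rightarrow> 's set" where
  "outer U = {x. \<forall>y\<in>U. \<not> (x \<le> y \<or> y \<le> x)}"

definition standing :: "'s::order itself \<Rightarrow> bool" where
  "standing _ \<longleftrightarrow>
     (\<forall>x::'s. finite (maxs {y. y < x}) \<and> finite (mins {y. x < y})) \<and>
     (\<forall>x y::'s. y < x \<longrightarrow> (\<exists>y0\<in>maxs {y. y < x}. y \<le> y0)) \<and>
     (\<forall>x z::'s. x < z \<longrightarrow> (\<exists>z0\<in>mins {z. x < z}. z0 \<le> z)) \<and>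
     (\<forall>x::'s. \<exists>y. y < x)"

definition timebox :: "'s::order set \<Rightarrow> bool" where
  "timebox L \<longleftrightarrow> finite L \<and> past L \<inter> fut L = {}"

definition FM :: "'e measure \<Rightarrow> 's set \<Rightarrow> ('s \<Rightarrow> 'e) measure" where
  "FM ME U = sigma UNIV {(\<lambda>\<omega>. \<omega> i) -` A | i A. i \<in> U \<and> A \<in> sets ME}"

definition OmegaM :: "'e measure \<Rightarrow> ('s \<Rightarrow> 'e) measure" where
  "OmegaM ME = PiM UNIV (\<lambda>_. ME)"

text \<open>A proper oriented kernel on L: for each omega a probability measure on
  (Omega, F_{S - L_+}), conditions (a)--(d).\<close>
definition proper_kernel ::
  "'e measure \<Rightarrow> 's::order set \<Rightarrow> (('s \<Rightarrow> 'e) \<Rightarrow> ('s \<Rightarrow> 'e) measure) \<Rightarrow> bool" where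
  "proper_kernel ME L k \<longleftrightarrow>
     (\<forall>\<omega>. prob_space (k \<omega>) \<and> space (k \<omega>) = UNIV \<and> sets (k \<omega>) = sets (FM ME (- fut L))) \<and>
     (\<forall>A \<in> sets (FM ME (- fut L)).
        (\<lambda>\<omega>. measure (k \<omega>) A) \<in> borel_measurable (FM ME (past L \<union> outer L))) \<and>
     (\<forall>A \<in> sets (FM ME L).
        (\<lambda>\<omega>. measure (k \<omega>) A) \<in> borel_measurable (FM ME (past L))) \<and>
     (\<forall>B \<in> sets (FM ME (past L \<union> outer L)). \<forall>\<omega>. measure (k \<omega>) B = indicator B \<omega>)"

text \<open>For time boxes L \<subseteq> D the composition
  gamma_D gamma_L is compared with gamma_D on bounded functions measurable w.r.t.
  F_{S - L_+} which are also measurable w.r.t. the domain F_{S - D_+} of gamma_D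
  (the only functions for which both sides are defined).\<close>
definition POS ::
  "'e measure \<Rightarrow> ('s::order set \<Rightarrow> ('s \<Rightarrow> 'e) \<Rightarrow> ('s \<Rightarrow> 'e) measure) \<Rightarrow> bool" where
  "POS ME \<gamma> \<longleftrightarrow>
     (\<forall>L. timebox L \<longrightarrow> proper_kernel ME L (\<gamma> L)) \<and>
     (\<forall>L D. timebox L \<longrightarrow> timebox D \<longrightarrow> L \<subseteq> D \<longrightarrow>
        (\<forall>h::('s \<Rightarrow> 'e) \<Rightarrow> real.
           h \<in> borel_measurable (FM ME (- (fut L \<union> fut D))) \<longrightarrow> bounded (range h) \<longrightarrow>
           (\<forall>\<omega>. (\<integral>\<sigma>. (\<integral>\<xi>. h \<xi> \<partial>(\<gamma> L \<sigma>)) \<partial>(\<gamma> D \<omega>)) = (\<integral>\<xi>. h \<xi> \<partial>(\<gamma> D \<omega>)))))"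

definition consistent_on ::
  "'e measure \<Rightarrow> ('s \<Rightarrow> 'e) measure \<Rightarrow> 's::order set \<Rightarrow> (('s \<Rightarrow> 'e) \<Rightarrow> ('s \<Rightarrow> 'e) measure) \<Rightarrow> bool" where
  "consistent_on ME \<mu> L k \<longleftrightarrow>
     (\<forall>A \<in> sets (FM ME (- fut L)). (\<integral>\<sigma>. measure (k \<sigma>) A \<partial>\<mu>) = measure \<mu> A)"

definition Gibbs ::
  "'e measure \<Rightarrow> ('s::order set \<Rightarrow> ('s \<Rightarrow> 'e) \<Rightarrow> ('s \<Rightarrow> 'e) measure) \<Rightarrow> ('s \<Rightarrow> 'e) measure set" where
  "Gibbs ME \<gamma> = {\<mu>. prob_space \<mu> \<and> sets \<mu> = sets (OmegaM ME) \<and>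
                    (\<forall>L. timebox L \<longrightarrow> consistent_on ME \<mu> L (\<gamma> L))}"

end

theory Submission
  imports Defs
begin


definition Gen :: "'e measure \<Rightarrow> 's set \<Rightarrow> ('s \<Rightarrow> 'e) set set" where
  "Gen ME U = {(\<lambda>\<omega>. \<omega> i) -` A | i A. i \<in> U \<and> A \<in> sets ME}"

lemma space_FM[simp]: "space (FM ME U) = UNIV"
  unfolding FM_def by (rule space_measure_of_conv)
lemma sets_FM: "sets (FM ME U) = sigma_sets UNIV (Gen ME U)"
  unfolding FM_def Gen_def by (rule sets_measure_of) auto

lemma Gen_FM: "Gen ME U \<subseteq> sets (FM ME U)"
  unfolding sets_FM by auto

lemma FM_mono: "U \<subseteq> V \<Longrightarrow> sets (FM ME U) \<subseteq> sets (FM ME V)"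
  unfolding sets_FM by (rule sigma_sets_mono') (auto simp: Gen_def)

lemma measurable_FM_mono: "U \<subseteq> V \<Longrightarrow> f \<in> measurable (FM ME U) N \<Longrightarrow> f \<in> measurable (FM ME V) N"
  using FM_mono[of U V ME] unfolding measurable_def by auto

lemma sigma_sets_FM_eqI:
  assumes "Gen ME U \<subseteq> R" "R \<subseteq> sets (FM ME U)"
  shows "sigma_sets UNIV R = sets (FM ME U)"
proof
  show "sigma_sets UNIV R \<subseteq> sets (FM ME U)"
    using assms(2) by (metis sets.sigma_sets_subset space_FM)
  show "sets (FM ME U) \<subseteq> sigma_sets UNIV R"
    unfolding sets_FM using assms(1) by (rule sigma_sets_mono')
qed

definition Rect :: "'e measure \<Rightarrow> 's set \<Rightarrow> 's set \<Rightarrow> ('s \<Rightarrow> 'e) set set" where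
  "Rect ME U V = {A \<inter> B | A B. A \<in> sets (FM ME U) \<and> B \<in> sets (FM ME V)}"

lemma Rect_Int_stable: "Int_stable (Rect ME U V)"
  unfolding Int_stable_def Rect_def
proof (safe)
  fix A B A' B' assume "A \<in> sets (FM ME U)" "B \<in> sets (FM ME V)" "A' \<in> sets (FM ME U)" "B' \<in> sets (FM ME V)"
  then show "\<exists>C D. A \<inter> B \<inter> (A' \<inter> B') = C \<inter> D \<and> C \<in> sets (FM ME U) \<and> D \<in> sets (FM ME V)"
    by (intro exI[of _ "A \<inter> A'"] exI[of _ "B \<inter> B'"]) auto
qed

lemma Rect_gen: "sets (FM ME (U \<union> V)) = sigma_sets UNIV (Rect ME U V)"
proof (rule sigma_sets_FM_eqI[symmetric])
  show "Gen ME (U \<union> V) \<subseteq> Rect ME U V"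
  proof
    fix X assume "X \<in> Gen ME (U \<union> V)"
    then obtain i A where X: "X = (\<lambda>\<omega>. \<omega> i) -` A" "i \<in> U \<union> V" "A \<in> sets ME" by (auto simp: Gen_def)
    show "X \<in> Rect ME U V"
    proof (cases "i \<in> U")
      case True
      then have "X \<in> sets (FM ME U)" using X Gen_FM[of ME U] by (auto simp: Gen_def)
      then show ?thesis unfolding Rect_def by (intro CollectI exI[of _ X] exI[of _ UNIV]) (auto simp: sets.top[of "FM ME V", simplified])
    next
      case False
      then have "X \<in> sets (FM ME V)" using X Gen_FM[of ME V] by (auto simp: Gen_def)
      then show ?thesis unfolding Rect_def by (intro CollectI exI[of _ X] exI[of _ UNIV]) (auto simp: sets.top[of "FM ME U", simplified])
    qed
  qed
  show "Rect ME U V \<subseteq> sets (FM ME (U \<union> V))"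
    unfolding Rect_def using FM_mono[of U "U \<union> V" ME] FM_mono[of V "U \<union> V" ME] by auto
qed

lemma coord_measurable: "space ME = UNIV \<Longrightarrow> i \<in> U \<Longrightarrow> (\<lambda>\<omega>. \<omega> i) \<in> measurable (FM ME U) ME"
  unfolding measurable_def using Gen_FM[of ME U] by (auto simp: Gen_def)

lemma sets_FM_OmegaM: assumes "space ME = UNIV" shows "sets (FM ME U) \<subseteq> sets (OmegaM ME)"
proof -
  have sp: "space (OmegaM ME) = UNIV" using assms by (simp add: OmegaM_def space_PiM)
  have "Gen ME U \<subseteq> sets (OmegaM ME)"
  proof
    fix X assume "X \<in> Gen ME U"
    then obtain i A where X: "X = (\<lambda>\<omega>. \<omega> i) -` A" "A \<in> sets ME" by (auto simp: Gen_def)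
    have "(\<lambda>\<omega>. \<omega> i) \<in> measurable (OmegaM ME) ME" unfolding OmegaM_def by simp
    then have "(\<lambda>\<omega>. \<omega> i) -` A \<inter> space (OmegaM ME) \<in> sets (OmegaM ME)" using X(2) by (rule measurable_sets)
    then show "X \<in> sets (OmegaM ME)" using X sp by (metis inf_top.right_neutral)
  qed
  then show ?thesis unfolding sets_FM using sets.sigma_sets_subset[of "Gen ME U" "OmegaM ME"] sp by metis
qed



lemma past_single: "past {x} = {z. z < x}" unfolding past_def by auto
lemma fut_single: "fut {x} = {z. x < z}" unfolding fut_def by auto
lemma outer_single: "outer {x} = {z. \<not> z \<le> x \<and> \<not> x \<le> z}" unfolding outer_def by auto

lemma maxsD: "x \<in> maxs L \<Longrightarrow> x \<in> L" "x \<in> maxs L \<Longrightarrow> y \<in> L \<Longrightarrow> \<not> x < y"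
  unfolding maxs_def by auto

lemma maxs_nonempty: assumes "finite L" "L \<noteq> {}" shows "\<exists>x. x \<in> maxs (L::'s::order set)"
proof -
  have "\<exists>x\<in>L. \<forall>y\<in>L. \<not> x < y"
    using assms
  proof (induction L rule: finite_ne_induct)
    case (singleton x) then show ?case by auto
  next
    case (insert a F)
    then obtain x where x: "x \<in> F" "\<forall>y\<in>F. \<not> x < y" by auto
    show ?case
    proof (cases "x < a")
      case True
      have "\<forall>y\<in>insert a F. \<not> a < y" using x True by (auto dest: less_trans)
      then show ?thesis by auto
    next
      case False then show ?thesis using x by auto
    qed
  qed
  then show ?thesis unfolding maxs_def by auto
qed

context
  fixes L :: "'s::order set" and x :: 's
  assumes tb: "timebox L" and xm: "x \<in> maxs L"
begin

lemma xL: "x \<in> L" using xm maxsD by auto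
lemma xmax: "y \<in> L \<Longrightarrow> \<not> x < y" by (rule maxsD(2)[OF xm])
lemma pf: "past L \<inter> fut L = {}" using tb unfolding timebox_def by auto

lemma T2: "fut (L - {x}) \<subseteq> fut L \<union> {x}" unfolding fut_def by auto
lemma T3: "past (L - {x}) \<subseteq> past L" unfolding past_def using xmax by auto
lemma xnp: "x \<notin> past (L - {x})" unfolding past_def using xmax by auto

lemma T1: "timebox (L - {x})"
proof -
  have "past (L - {x}) \<inter> fut (L - {x}) = {}"
    using T2 T3 xnp pf by blast
  then show ?thesis using tb unfolding timebox_def by auto
qed

lemma T4: "fut {x} \<subseteq> fut L" unfolding fut_def using xmax xL by auto
lemma T5: "past L \<union> outer L \<subseteq> past {x} \<union> outer {x}"
proof
  fix z assume z: "z \<in> past L \<union> outer L"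
  show "z \<in> past {x} \<union> outer {x}"
  proof (cases "z \<in> outer L")
    case True then show ?thesis using xL unfolding outer_def by auto
  next
    case False
    then obtain l where l: "z \<notin> L" "l \<in> L" "z < l" using z unfolding past_def by auto
    have "\<not> x \<le> z" using l xmax[of l] xL by (metis le_less_trans)
    moreover have "z \<noteq> x" using l xL by auto
    ultimately show ?thesis unfolding past_def outer_def by auto
  qed
qed

lemma T6: "past L \<union> outer L \<subseteq> past (L - {x}) \<union> outer (L - {x})"
proof
  fix z assume z: "z \<in> past L \<union> outer L"
  show "z \<in> past (L - {x}) \<union> outer (L - {x})"
  proof (cases "z \<in> outer L")
    case True then show ?thesis unfolding outer_def by auto
  next
    case False
    then obtain l where l: "z \<notin> L" "l \<in> L" "z < l" using z unfolding past_def by auto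
    have zp: "z \<in> past L" using l unfolding past_def by auto
    show ?thesis
    proof (cases "\<exists>l'\<in>L - {x}. z < l'")
      case True then show ?thesis using l unfolding past_def by auto
    next
      case nl: False
      have "\<not> (\<exists>l'\<in>L - {x}. l' \<le> z)"
      proof
        assume "\<exists>l'\<in>L - {x}. l' \<le> z"
        then obtain l' where "l' \<in> L" "l' < z" using l by (auto simp: order.order_iff_strict)
        then have "z \<in> fut L" using l unfolding fut_def by auto
        then show False using zp pf by auto
      qed
      then show ?thesis using nl unfolding outer_def by (auto simp: order.order_iff_strict)
    qed
  qed
qed

lemma T8: "past {x} \<inter> fut (L - {x}) = {}"
proof -
  { fix z assume z: "z < x" "z \<in> fut (L - {x})"
    then obtain y where y: "y \<in> L" "y < z" "z \<notin> L - {x}" unfolding fut_def by auto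
    have "z \<noteq> x" using z by auto
    then have "z \<notin> L" using y by auto
    then have "z \<in> past L" "z \<in> fut L" using z y xL unfolding past_def fut_def by auto
    then have False using pf by auto }
  then show ?thesis unfolding past_single by auto
qed
end

lemma T7: "- fut L - L \<subseteq> past L \<union> outer (L::'s::order set)"
  unfolding past_def outer_def fut_def by (auto simp: order.order_iff_strict)



definition rk :: "'e measure \<Rightarrow> ('s \<Rightarrow> 'e) measure \<Rightarrow> 's set \<Rightarrow> ('s \<Rightarrow> 'e) measure" where
  "rk ME M V = restr_to_subalg M (FM ME V)"

lemma measurable_FM_into: "sets (FM ME U) \<subseteq> sets M \<Longrightarrow> space M = UNIV \<Longrightarrow> f \<in> measurable (FM ME U) N \<Longrightarrow> f \<in> measurable M N"
  unfolding measurable_def by auto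

context
  fixes ME :: "'e measure" and L :: "'s::order set" and k
  assumes pk: "proper_kernel ME L k" and tbL: "timebox L"
begin

lemma pk_prob: "prob_space (k \<omega>)" using pk unfolding proper_kernel_def by auto
lemma pk_space: "space (k \<omega>) = UNIV" using pk unfolding proper_kernel_def by auto
lemma pk_sets: "sets (k \<omega>) = sets (FM ME (- fut L))" using pk unfolding proper_kernel_def by auto
lemma pk_b: "A \<in> sets (FM ME (- fut L)) \<Longrightarrow> (\<lambda>\<omega>. measure (k \<omega>) A) \<in> borel_measurable (FM ME (past L \<union> outer L))"
  using pk unfolding proper_kernel_def by auto
lemma pk_c: "A \<in> sets (FM ME L) \<Longrightarrow> (\<lambda>\<omega>. measure (k \<omega>) A) \<in> borel_measurable (FM ME (past L))"
  using pk unfolding proper_kernel_def by auto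
lemma pk_d: "B \<in> sets (FM ME (past L \<union> outer L)) \<Longrightarrow> measure (k \<omega>) B = indicator B \<omega>"
  using pk unfolding proper_kernel_def by auto

lemma pk_sub: "V \<subseteq> - fut L \<Longrightarrow> subalgebra (k \<omega>) (FM ME V)"
  unfolding subalgebra_def using pk_space pk_sets FM_mono[of V "- fut L" ME] by auto

lemma rk_sets: "V \<subseteq> - fut L \<Longrightarrow> sets (rk ME (k \<omega>) V) = sets (FM ME V)"
  unfolding rk_def by (rule sets_restr_to_subalg[OF pk_sub])
lemma rk_space: "space (rk ME (k \<omega>) V) = UNIV"
  unfolding rk_def by (simp add: space_restr_to_subalg pk_space)
lemma rk_emeasure: "V \<subseteq> - fut L \<Longrightarrow> A \<in> sets (FM ME V) \<Longrightarrow> emeasure (rk ME (k \<omega>) V) A = emeasure (k \<omega>) A"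
  unfolding rk_def by (rule emeasure_restr_to_subalg[OF pk_sub])
lemma rk_prob: "V \<subseteq> - fut L \<Longrightarrow> prob_space (rk ME (k \<omega>) V)"
  unfolding rk_def by (rule prob_space_restr_to_subalg[OF pk_sub pk_prob])
lemma rk_integral: "V \<subseteq> - fut L \<Longrightarrow> f \<in> borel_measurable (FM ME V) \<Longrightarrow>
   (\<integral>x. f x \<partial>rk ME (k \<omega>) V) = (\<integral>x. (f x :: real) \<partial>k \<omega>)"
  unfolding rk_def by (rule integral_subalgebra2[OF pk_sub])

lemma PO_fut: "past L \<union> outer L \<subseteq> - fut L"
  using tbL unfolding timebox_def fut_def outer_def by (auto simp: order.order_iff_strict)

lemma PO_sets: "sets (FM ME (past L \<union> outer L)) \<subseteq> sets (k \<omega>)"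
  using FM_mono[OF PO_fut] pk_sets by auto

lemma pk_AE_set:
  assumes B: "B \<in> sets (FM ME (past L \<union> outer L))"
  shows "AE \<sigma> in k \<omega>. (\<sigma> \<in> B \<longleftrightarrow> \<omega> \<in> B)"
proof -
  interpret prob_space "k \<omega>" by (rule pk_prob)
  have Bs: "B \<in> sets (k \<omega>)" using B PO_sets by auto
  show ?thesis
  proof (cases "\<omega> \<in> B")
    case True
    then have "prob B = 1" using pk_d[OF B] by simp
    then show ?thesis using AE_prob_1 True by auto
  next
    case False
    then have "prob B = 0" using pk_d[OF B] by simp
    then have "prob (space (k \<omega>) - B) = 1" using prob_compl[OF Bs] by simp
    then have "AE \<sigma> in k \<omega>. \<sigma> \<in> space (k \<omega>) - B" by (rule AE_prob_1)
    then show ?thesis using False by auto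
  qed
qed

lemma pk_AE_fun:
  assumes f: "f \<in> borel_measurable (FM ME (past L \<union> outer L))"
  shows "AE \<sigma> in k \<omega>. f \<sigma> = (f \<omega> :: real)"
proof -
  have "f -` {f \<omega>} \<inter> space (FM ME (past L \<union> outer L)) \<in> sets (FM ME (past L \<union> outer L))"
    by (rule measurable_sets[OF f]) simp
  then have B: "f -` {f \<omega>} \<in> sets (FM ME (past L \<union> outer L))" by simp
  show ?thesis using pk_AE_set[OF B, of \<omega>] by auto
qed

lemma pk_integral_const:
  assumes f: "f \<in> borel_measurable (FM ME (past L \<union> outer L))"
  shows "(\<integral>\<sigma>. f \<sigma> \<partial>k \<omega>) = (f \<omega> :: real)"
proof -
  interpret prob_space "k \<omega>" by (rule pk_prob)
  have fm: "f \<in> borel_measurable (k \<omega>)"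
    by (rule measurable_FM_into[OF PO_sets pk_space f])
  have "(\<integral>\<sigma>. f \<sigma> \<partial>k \<omega>) = (\<integral>\<sigma>. f \<omega> \<partial>k \<omega>)"
    by (rule integral_cong_AE[OF fm _ pk_AE_fun[OF f]]) simp
  then show ?thesis by (simp add: prob_space)
qed

lemma K3:
  assumes V: "V \<subseteq> - fut L"
  shows "(\<lambda>\<omega>. rk ME (k \<omega>) V) \<in> measurable (FM ME (past L \<union> (V - L))) (subprob_algebra (FM ME V))"
proof (rule measurable_subprob_algebra_generated[where \<Omega>=UNIV and G="Rect ME (V \<inter> L) (V - L)"])
  have "V = (V \<inter> L) \<union> (V - L)" by auto
  then show "sets (FM ME V) = sigma_sets UNIV (Rect ME (V \<inter> L) (V - L))"
    using Rect_gen[of ME "V \<inter> L" "V - L"] by metis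
  show "Int_stable (Rect ME (V \<inter> L) (V - L))" by (rule Rect_Int_stable)
  show "Rect ME (V \<inter> L) (V - L) \<subseteq> Pow UNIV" by auto
  fix a
  show "subprob_space (rk ME (k a) V)" using rk_prob[OF V] by (rule prob_space_imp_subprob_space)
  show "sets (rk ME (k a) V) = sets (FM ME V)" by (rule rk_sets[OF V])
next
  let ?T = "past L \<union> (V - L)"
  fix X assume "X \<in> Rect ME (V \<inter> L) (V - L)"
  then obtain A B where X: "X = A \<inter> B" and A: "A \<in> sets (FM ME (V \<inter> L))" and B: "B \<in> sets (FM ME (V - L))"
    unfolding Rect_def by auto
  have AV: "A \<in> sets (FM ME V)" using A FM_mono[of "V \<inter> L" V ME] by auto
  have BV: "B \<in> sets (FM ME V)" using B FM_mono[of "V - L" V ME] by auto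
  have AL: "A \<in> sets (FM ME L)" using A FM_mono[of "V \<inter> L" L ME] by auto
  have BPO: "B \<in> sets (FM ME (past L \<union> outer L))" using B FM_mono[of "V - L" "past L \<union> outer L" ME] T7[of L] V by auto
  have sV: "sets (FM ME V) \<subseteq> sets (k \<omega>)" for \<omega> using FM_mono[OF V] pk_sets by auto
  have eq: "emeasure (rk ME (k \<omega>) V) X = ennreal (indicator B \<omega> * measure (k \<omega>) A)" for \<omega>
  proof -
    interpret prob_space "k \<omega>" by (rule pk_prob)
    have XV: "X \<in> sets (FM ME V)" using AV BV X by auto
    have "emeasure (rk ME (k \<omega>) V) X = emeasure (k \<omega>) X" by (rule rk_emeasure[OF V XV])
    also have "\<dots> = emeasure (k \<omega>) (if \<omega> \<in> B then A else {})"
    proof (rule emeasure_eq_AE)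
      show "AE x in k \<omega>. (x \<in> X) = (x \<in> (if \<omega> \<in> B then A else {}))"
        using pk_AE_set[OF BPO, of \<omega>] X by auto
      show "X \<in> sets (k \<omega>)" using XV sV by auto
      show "(if \<omega> \<in> B then A else {}) \<in> sets (k \<omega>)" using AV sV by auto
    qed
    also have "\<dots> = ennreal (indicator B \<omega> * measure (k \<omega>) A)"
      using emeasure_eq_measure by (auto simp: indicator_def)
    finally show ?thesis .
  qed
  have m1: "(\<lambda>\<omega>. measure (k \<omega>) A) \<in> borel_measurable (FM ME ?T)"
    by (rule measurable_FM_mono[OF _ pk_c[OF AL]]) auto
  have m2: "indicator B \<in> borel_measurable (FM ME ?T)"
    by (rule measurable_FM_mono[OF _ borel_measurable_indicator[OF B]]) auto
  show "(\<lambda>a. emeasure (rk ME (k a) V) X) \<in> borel_measurable (FM ME ?T)"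
    unfolding eq using m1 m2 by measurable
next
  have "emeasure (rk ME (k a) V) UNIV = 1" for a
  proof -
    interpret prob_space "rk ME (k a) V" by (rule rk_prob[OF V])
    show ?thesis using emeasure_space_1 rk_space by simp
  qed
  then show "(\<lambda>a. emeasure (rk ME (k a) V) UNIV) \<in> borel_measurable (FM ME (past L \<union> (V - L)))" by simp
qed

lemma K4:
  assumes V: "V \<subseteq> - fut L" and f: "f \<in> borel_measurable (FM ME V)"
  shows "(\<lambda>\<omega>. \<integral>\<sigma>. (f \<sigma> :: real) \<partial>k \<omega>) \<in> borel_measurable (FM ME (past L \<union> (V - L)))"
proof -
  have "(\<lambda>\<omega>. \<integral>\<sigma>. f \<sigma> \<partial>rk ME (k \<omega>) V) \<in> borel_measurable (FM ME (past L \<union> (V - L)))"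
    by (rule measurable_compose[OF K3[OF V] integral_measurable_subprob_algebra[OF f]])
  then show ?thesis using rk_integral[OF V f] by simp
qed

lemma K4m:
  assumes V: "V \<subseteq> - fut L" and A: "A \<in> sets (FM ME V)"
  shows "(\<lambda>\<omega>. measure (k \<omega>) A) \<in> borel_measurable (FM ME (past L \<union> (V - L)))"
  using K4[OF V borel_measurable_indicator[OF A]] by (simp add: pk_space)

end


lemma timebox_single: "timebox {x::'s::order}"
  unfolding timebox_def past_def fut_def by auto

lemma FM_UNIV[simp]: "UNIV \<in> sets (FM ME U)" using sets.top[of "FM ME U"] by simp

lemma PO_fut_tb: "timebox L \<Longrightarrow> past L \<union> outer L \<subseteq> - fut L"
  unfolding timebox_def fut_def outer_def by (auto simp: order.order_iff_strict)

lemma fut_disj: "L \<inter> fut L = {}" unfolding fut_def by auto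

definition comp :: "'e measure \<Rightarrow> ('s::order \<Rightarrow> ('s \<Rightarrow> 'e) \<Rightarrow> ('s \<Rightarrow> 'e) measure) \<Rightarrow>
   (('s \<Rightarrow> 'e) \<Rightarrow> ('s \<Rightarrow> 'e) measure) \<Rightarrow> 's \<Rightarrow> 's set \<Rightarrow> ('s \<Rightarrow> 'e) \<Rightarrow> ('s \<Rightarrow> 'e) measure" where
  "comp ME g k x L \<omega> = bind (k \<omega>) (\<lambda>\<sigma>. rk ME (g x \<sigma>) (- fut L))"

context
  fixes ME :: "'e measure" and g :: "'s::order \<Rightarrow> ('s \<Rightarrow> 'e) \<Rightarrow> ('s \<Rightarrow> 'e) measure"
    and L :: "'s set" and x :: 's and k
  assumes gk: "\<And>x. proper_kernel ME {x} (g x)"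
    and tb: "timebox L" and xm: "x \<in> maxs L" and pk: "proper_kernel ME (L - {x}) k"
begin

lemma tb': "timebox (L - {x})" by (rule T1[OF tb xm])

lemma futx: "- fut L \<subseteq> - fut {x}" using T4[OF tb xm] by auto

lemma Tx_sub: "past {x} \<union> (- fut L - {x}) \<subseteq> - fut (L - {x})"
  using T8[OF tb xm] T2[OF tb xm] by auto

lemma Kx: "(\<lambda>\<sigma>. rk ME (g x \<sigma>) (- fut L)) \<in> measurable (FM ME (past {x} \<union> (- fut L - {x}))) (subprob_algebra (FM ME (- fut L)))"
  using K3[OF gk timebox_single futx] .

lemma Kx': "(\<lambda>\<sigma>. rk ME (g x \<sigma>) (- fut L)) \<in> measurable (k \<omega>) (subprob_algebra (FM ME (- fut L)))"
proof -
  have "(\<lambda>\<sigma>. rk ME (g x \<sigma>) (- fut L)) \<in> measurable (FM ME (- fut (L - {x}))) (subprob_algebra (FM ME (- fut L)))"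
    by (rule measurable_FM_mono[OF Tx_sub Kx])
  then show ?thesis using pk_sets[OF pk tb'] by (simp cong: measurable_cong_sets)
qed

lemma comp_sets: "sets (comp ME g k x L \<omega>) = sets (FM ME (- fut L))"
  unfolding comp_def by (rule sets_bind) (auto simp: rk_sets[OF gk timebox_single futx] pk_space[OF pk tb'])

lemma comp_space: "space (comp ME g k x L \<omega>) = UNIV"
  using comp_sets[of \<omega>] by (metis sets_eq_imp_space_eq space_FM)

lemma comp_int:
  fixes h :: "('s \<Rightarrow> 'e) \<Rightarrow> real"
  assumes h: "h \<in> borel_measurable (FM ME (- fut L))" and hb: "\<And>z. \<bar>h z\<bar> \<le> B"
  shows "(\<integral>\<xi>. h \<xi> \<partial>comp ME g k x L \<omega>) = (\<integral>\<sigma>. (\<integral>\<xi>. h \<xi> \<partial>g x \<sigma>) \<partial>k \<omega>)"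
proof -
  interpret prob_space "k \<omega>" by (rule pk_prob[OF pk tb'])
  have "(\<integral>\<xi>. h \<xi> \<partial>comp ME g k x L \<omega>) = (\<integral>\<sigma>. (\<integral>\<xi>. h \<xi> \<partial>rk ME (g x \<sigma>) (- fut L)) \<partial>k \<omega>)"
    unfolding comp_def
  proof (rule integral_bind[where K="FM ME (- fut L)" and B=B and B'=1])
    show "h \<in> borel_measurable (FM ME (- fut L))" by (rule h)
    show "(\<lambda>\<sigma>. rk ME (g x \<sigma>) (- fut L)) \<in> measurable (k \<omega>) (subprob_algebra (FM ME (- fut L)))" by (rule Kx')
    show "\<And>z. z \<in> space (FM ME (- fut L)) \<Longrightarrow> \<bar>h z\<bar> \<le> B" using hb by auto
    show "finite_measure (k \<omega>)" by unfold_locales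
    show "AE z in k \<omega>. emeasure (rk ME (g x z) (- fut L)) (space (rk ME (g x z) (- fut L))) \<le> ennreal 1"
      using prob_space.emeasure_space_1[OF rk_prob[OF gk timebox_single futx]] by simp
  qed
  also have "\<dots> = (\<integral>\<sigma>. (\<integral>\<xi>. h \<xi> \<partial>g x \<sigma>) \<partial>k \<omega>)"
    using rk_integral[OF gk timebox_single futx h] by simp
  finally show ?thesis .
qed

lemma comp_prob: "prob_space (comp ME g k x L \<omega>)"
proof (rule prob_spaceI)
  have "emeasure (comp ME g k x L \<omega>) UNIV = (\<integral>\<^sup>+\<sigma>. emeasure (rk ME (g x \<sigma>) (- fut L)) UNIV \<partial>k \<omega>)"
    unfolding comp_def by (rule emeasure_bind[OF _ Kx']) (auto simp: pk_space[OF pk tb'])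
  also have "\<dots> = (\<integral>\<^sup>+\<sigma>. 1 \<partial>k \<omega>)"
    using prob_space.emeasure_space_1[OF rk_prob[OF gk timebox_single futx]] rk_space[OF gk timebox_single] 
    by (metis (no_types, lifting))
  also have "\<dots> = 1" using prob_space.emeasure_space_1[OF pk_prob[OF pk tb']] pk_space[OF pk tb'] by simp
  finally show "emeasure (comp ME g k x L \<omega>) (space (comp ME g k x L \<omega>)) = 1" by (simp add: comp_space)
qed

lemma comp_measure:
  assumes A: "A \<in> sets (FM ME (- fut L))"
  shows "measure (comp ME g k x L \<omega>) A = (\<integral>\<sigma>. measure (g x \<sigma>) A \<partial>k \<omega>)"
proof -
  have "measure (comp ME g k x L \<omega>) A = (\<integral>\<xi>. indicator A \<xi> \<partial>comp ME g k x L \<omega>)"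
    by (simp add: comp_space)
  also have "\<dots> = (\<integral>\<sigma>. (\<integral>\<xi>. indicator A \<xi> \<partial>g x \<sigma>) \<partial>k \<omega>)"
    by (rule comp_int[OF borel_measurable_indicator[OF A], of 1]) (simp add: indicator_def)
  also have "\<dots> = (\<integral>\<sigma>. measure (g x \<sigma>) A \<partial>k \<omega>)"
    by (simp add: pk_space[OF gk timebox_single])
  finally show ?thesis .
qed

lemma comp_proper: "proper_kernel ME L (comp ME g k x L)"
  unfolding proper_kernel_def
proof (intro conjI ballI allI)
  fix \<omega>
  show "prob_space (comp ME g k x L \<omega>)" by (rule comp_prob)
  show "space (comp ME g k x L \<omega>) = UNIV" by (rule comp_space)
  show "sets (comp ME g k x L \<omega>) = sets (FM ME (- fut L))" by (rule comp_sets)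
next
  fix A assume A: "A \<in> sets (FM ME (- fut L))"
  have m1: "(\<lambda>\<sigma>. measure (g x \<sigma>) A) \<in> borel_measurable (FM ME (past {x} \<union> (- fut L - {x})))"
    using K4m[OF gk timebox_single futx A] .
  have m2: "(\<lambda>\<omega>. \<integral>\<sigma>. measure (g x \<sigma>) A \<partial>k \<omega>) \<in> borel_measurable
      (FM ME (past (L - {x}) \<union> ((past {x} \<union> (- fut L - {x})) - (L - {x}))))"
    by (rule K4[OF pk tb' Tx_sub m1])
  have sub: "past (L - {x}) \<union> ((past {x} \<union> (- fut L - {x})) - (L - {x})) \<subseteq> past L \<union> outer L"
    using T3[OF tb xm] T7[of L] xL[OF tb xm] unfolding past_def by auto
  show "(\<lambda>\<omega>. measure (comp ME g k x L \<omega>) A) \<in> borel_measurable (FM ME (past L \<union> outer L))"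
    unfolding comp_measure[OF A] by (rule measurable_FM_mono[OF sub m2])
next
  fix A assume A: "A \<in> sets (FM ME L)"
  have LV: "L \<subseteq> - fut {x}" using T4[OF tb xm] fut_disj[of L] by auto
  have A': "A \<in> sets (FM ME (- fut L))" using A FM_mono[of L "- fut L" ME] fut_disj[of L] by auto
  have m1: "(\<lambda>\<sigma>. measure (g x \<sigma>) A) \<in> borel_measurable (FM ME (past {x} \<union> (L - {x})))"
    using K4m[OF gk timebox_single LV A] .
  have V2: "past {x} \<union> (L - {x}) \<subseteq> - fut (L - {x})"
    using T8[OF tb xm] fut_disj[of "L - {x}"] by auto
  have m2: "(\<lambda>\<omega>. \<integral>\<sigma>. measure (g x \<sigma>) A \<partial>k \<omega>) \<in> borel_measurable
      (FM ME (past (L - {x}) \<union> ((past {x} \<union> (L - {x})) - (L - {x}))))"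
    by (rule K4[OF pk tb' V2 m1])
  have sub: "past (L - {x}) \<union> ((past {x} \<union> (L - {x})) - (L - {x})) \<subseteq> past L"
    using T3[OF tb xm] xL[OF tb xm] unfolding past_def by auto
  show "(\<lambda>\<omega>. measure (comp ME g k x L \<omega>) A) \<in> borel_measurable (FM ME (past L))"
    unfolding comp_measure[OF A'] by (rule measurable_FM_mono[OF sub m2])
next
  fix B \<omega> assume B: "B \<in> sets (FM ME (past L \<union> outer L))"
  have B': "B \<in> sets (FM ME (- fut L))" using B FM_mono[OF PO_fut_tb[OF tb]] by auto
  have Bx: "B \<in> sets (FM ME (past {x} \<union> outer {x}))" using B FM_mono[OF T5[OF tb xm]] by auto
  have BL: "B \<in> sets (FM ME (past (L - {x}) \<union> outer (L - {x})))" using B FM_mono[OF T6[OF tb xm]] by auto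
  have "measure (comp ME g k x L \<omega>) B = (\<integral>\<sigma>. measure (g x \<sigma>) B \<partial>k \<omega>)" by (rule comp_measure[OF B'])
  also have "\<dots> = (\<integral>\<sigma>. indicator B \<sigma> \<partial>k \<omega>)" using pk_d[OF gk timebox_single Bx] by simp
  also have "\<dots> = measure (k \<omega>) B" by (simp add: pk_space[OF pk tb'])
  also have "\<dots> = indicator B \<omega>" by (rule pk_d[OF pk tb' BL])
  finally show "measure (comp ME g k x L \<omega>) B = indicator B \<omega>" .
qed

end


definition Rect3 :: "'e measure \<Rightarrow> 's set \<Rightarrow> 's set \<Rightarrow> 's set \<Rightarrow> ('s \<Rightarrow> 'e) set set" where
  "Rect3 ME U V W = {A \<inter> B \<inter> C | A B C. A \<in> sets (FM ME U) \<and> B \<in> sets (FM ME V) \<and> C \<in> sets (FM ME W)}"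

lemma Rect3_Int_stable: "Int_stable (Rect3 ME U V W)"
  unfolding Int_stable_def Rect3_def
proof (safe)
  fix A B C A' B' C' assume "A \<in> sets (FM ME U)" "B \<in> sets (FM ME V)" "C \<in> sets (FM ME W)"
    "A' \<in> sets (FM ME U)" "B' \<in> sets (FM ME V)" "C' \<in> sets (FM ME W)"
  then show "\<exists>A'' B'' C''. A \<inter> B \<inter> C \<inter> (A' \<inter> B' \<inter> C') = A'' \<inter> B'' \<inter> C'' \<and> A'' \<in> sets (FM ME U) \<and> B'' \<in> sets (FM ME V) \<and> C'' \<in> sets (FM ME W)"
    by (intro exI[of _ "A \<inter> A'"] exI[of _ "B \<inter> B'"] exI[of _ "C \<inter> C'"]) auto
qed

lemma Rect3_gen: "sets (FM ME (U \<union> V \<union> W)) = sigma_sets UNIV (Rect3 ME U V W)"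
proof (rule sigma_sets_FM_eqI[symmetric])
  show "Gen ME (U \<union> V \<union> W) \<subseteq> Rect3 ME U V W"
  proof
    fix X assume "X \<in> Gen ME (U \<union> V \<union> W)"
    then obtain i A where X: "X = (\<lambda>\<omega>. \<omega> i) -` A" "i \<in> U \<union> V \<union> W" "A \<in> sets ME" by (auto simp: Gen_def)
    have m: "i \<in> Z \<Longrightarrow> X \<in> sets (FM ME Z)" for Z using X Gen_FM[of ME Z] by (auto simp: Gen_def)
    show "X \<in> Rect3 ME U V W"
    proof (cases "i \<in> U")
      case True
      then show ?thesis unfolding Rect3_def using m[of U] by (intro CollectI exI[of _ X] exI[of _ UNIV]) auto
    next
      case F1: False
      show ?thesis
      proof (cases "i \<in> V")
        case True
        then show ?thesis unfolding Rect3_def using m[of V] by (intro CollectI exI[of _ UNIV] exI[of _ X]) auto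
      next
        case False
        then have "i \<in> W" using F1 X by auto
        then show ?thesis unfolding Rect3_def using m[of W] by (intro CollectI exI[of _ UNIV] exI[of _ UNIV] exI[of _ X]) auto
      qed
    qed
  qed
  show "Rect3 ME U V W \<subseteq> sets (FM ME (U \<union> V \<union> W))"
    unfolding Rect3_def using FM_mono[of U "U \<union> V \<union> W" ME] FM_mono[of V "U \<union> V \<union> W" ME]
      FM_mono[of W "U \<union> V \<union> W" ME] by blast
qed

lemma pk_rect:
  assumes pk: "proper_kernel ME L k" and tbL: "timebox L"
    and A: "A \<in> sets (k \<omega>)" and B: "B \<in> sets (FM ME (past L \<union> outer L))"
  shows "emeasure (k \<omega>) (A \<inter> B) = (if \<omega> \<in> B then emeasure (k \<omega>) A else 0)"
proof -
  have "emeasure (k \<omega>) (A \<inter> B) = emeasure (k \<omega>) (if \<omega> \<in> B then A else {})"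
  proof (rule emeasure_eq_AE)
    show "AE x in k \<omega>. (x \<in> A \<inter> B) = (x \<in> (if \<omega> \<in> B then A else {}))"
      using pk_AE_set[OF pk tbL B, of \<omega>] by auto
    have "B \<in> sets (k \<omega>)" using B PO_sets[OF pk tbL] by auto
    then show "A \<inter> B \<in> sets (k \<omega>)" using A by auto
    show "(if \<omega> \<in> B then A else {}) \<in> sets (k \<omega>)" using A by auto
  qed
  then show ?thesis by auto
qed

lemma prob_emeasure: "prob_space M \<Longrightarrow> emeasure M A = ennreal (measure M A)"
proof -
  assume "prob_space M"
  then interpret prob_space M .
  show ?thesis by (rule emeasure_eq_measure)
qed

definition incomp :: "'s::order \<Rightarrow> 's \<Rightarrow> bool" where
  "incomp x y \<longleftrightarrow> \<not> x \<le> y \<and> \<not> y \<le> x"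

context
  fixes ME :: "'e measure" and g :: "'s::order \<Rightarrow> ('s \<Rightarrow> 'e) \<Rightarrow> ('s \<Rightarrow> 'e) measure"
  assumes gk: "\<And>x. proper_kernel ME {x} (g x)"
begin

lemma half:
  assumes inc: "incomp x y" and V: "V \<subseteq> - (fut {x} \<union> fut {y})"
    and W1: "past {y} \<union> (V - {y}) \<subseteq> W" and W2: "W \<subseteq> - fut {x}"
    and A: "A \<in> sets (FM ME (V \<inter> {x}))" and B: "B \<in> sets (FM ME (V \<inter> {y}))"
    and C: "C \<in> sets (FM ME (V - {x, y}))"
  shows "emeasure (bind (rk ME (g x \<sigma>) W) (\<lambda>\<tau>. rk ME (g y \<tau>) V)) (A \<inter> B \<inter> C)
     = ennreal (indicator C \<sigma> * measure (g y \<sigma>) B * measure (g x \<sigma>) A)"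
proof -
  note tx = timebox_single[of x] and ty = timebox_single[of y]
  have Vy: "V \<subseteq> - fut {y}" using V by auto
  have Ky: "(\<lambda>\<tau>. rk ME (g y \<tau>) V) \<in> measurable (FM ME (past {y} \<union> (V - {y}))) (subprob_algebra (FM ME V))"
    by (rule K3[OF gk ty Vy])
  have Ky': "(\<lambda>\<tau>. rk ME (g y \<tau>) V) \<in> measurable (rk ME (g x \<sigma>) W) (subprob_algebra (FM ME V))"
    using measurable_FM_mono[OF W1 Ky] rk_sets[OF gk tx W2] by (simp cong: measurable_cong_sets)
  have AV: "A \<in> sets (FM ME V)" using A FM_mono[of "V \<inter> {x}" V ME] by auto
  have BV: "B \<in> sets (FM ME V)" using B FM_mono[of "V \<inter> {y}" V ME] by auto
  have CV: "C \<in> sets (FM ME V)" using C FM_mono[of "V - {x,y}" V ME] by auto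
  have R: "A \<inter> B \<inter> C \<in> sets (FM ME V)" using AV BV CV by auto
  have xo: "{x} \<subseteq> outer {y}" using inc unfolding outer_def incomp_def by auto
  have Cy: "V - {x, y} \<subseteq> past {y} \<union> outer {y}" using T7[of "{y}"] Vy by auto
  have Cx: "V - {x, y} \<subseteq> past {x} \<union> outer {x}" using T7[of "{x}"] V by auto
  have py: "past {y} \<subseteq> past {x} \<union> outer {x}"
    using inc unfolding past_def outer_def incomp_def by (auto dest: less_le_trans order.strict_implies_order)
  have ACy: "A \<inter> C \<in> sets (FM ME (past {y} \<union> outer {y}))"
  proof -
    have "A \<in> sets (FM ME (past {y} \<union> outer {y}))" using A FM_mono[of "V \<inter> {x}" "past {y} \<union> outer {y}" ME] xo by auto
    moreover have "C \<in> sets (FM ME (past {y} \<union> outer {y}))" using C FM_mono[OF Cy] by auto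
    ultimately show ?thesis by auto
  qed
  have Cx': "C \<in> sets (FM ME (past {x} \<union> outer {x}))" using C FM_mono[OF Cx] by auto
  have By: "B \<in> sets (FM ME {y})" using B FM_mono[of "V \<inter> {y}" "{y}" ME] by auto
  have mB: "(\<lambda>\<tau>. measure (g y \<tau>) B) \<in> borel_measurable (FM ME (past {x} \<union> outer {x}))"
    by (rule measurable_FM_mono[OF py pk_c[OF gk ty By]])
  have Ax: "A \<in> sets (g x \<sigma>)" using A FM_mono[of "V \<inter> {x}" "- fut {x}" ME] pk_sets[OF gk tx] V by auto
  have Rs: "A \<inter> B \<inter> C \<in> sets (g y \<tau>)" for \<tau> using R FM_mono[OF Vy] pk_sets[OF gk ty] by auto
  have Bs: "B \<in> sets (g y \<tau>)" for \<tau> using BV FM_mono[OF Vy] pk_sets[OF gk ty] by auto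
  have mR: "(\<lambda>\<tau>. emeasure (g y \<tau>) (A \<inter> B \<inter> C)) \<in> borel_measurable (FM ME W)"
  proof -
    have "(\<lambda>\<tau>. measure (g y \<tau>) (A \<inter> B \<inter> C)) \<in> borel_measurable (FM ME W)"
      by (rule measurable_FM_mono[OF W1 K4m[OF gk ty Vy R]])
    then show ?thesis using prob_emeasure[OF pk_prob[OF gk ty]] by simp
  qed
  have "emeasure (bind (rk ME (g x \<sigma>) W) (\<lambda>\<tau>. rk ME (g y \<tau>) V)) (A \<inter> B \<inter> C)
      = (\<integral>\<^sup>+\<tau>. emeasure (rk ME (g y \<tau>) V) (A \<inter> B \<inter> C) \<partial>rk ME (g x \<sigma>) W)"
    by (rule emeasure_bind[OF _ Ky' R]) (simp add: rk_space[OF gk tx])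
  also have "\<dots> = (\<integral>\<^sup>+\<tau>. emeasure (g y \<tau>) (A \<inter> B \<inter> C) \<partial>rk ME (g x \<sigma>) W)"
    using rk_emeasure[OF gk ty Vy R] by simp
  also have "\<dots> = (\<integral>\<^sup>+\<tau>. emeasure (g y \<tau>) (A \<inter> B \<inter> C) \<partial>g x \<sigma>)"
    unfolding rk_def by (rule nn_integral_subalgebra2[OF pk_sub[OF gk tx W2] mR])
  also have "\<dots> = (\<integral>\<^sup>+\<tau>. ennreal (indicator C \<sigma> * measure (g y \<sigma>) B) * indicator A \<tau> \<partial>g x \<sigma>)"
  proof (rule nn_integral_cong_AE)
    have e1: "emeasure (g y \<tau>) (A \<inter> B \<inter> C) = (if \<tau> \<in> A \<inter> C then ennreal (measure (g y \<tau>) B) else 0)" for \<tau>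
    proof -
      have "A \<inter> B \<inter> C = B \<inter> (A \<inter> C)" by auto
      then show ?thesis using pk_rect[OF gk ty Bs ACy, of \<tau>]
        prob_emeasure[OF pk_prob[OF gk ty]] by simp
    qed
    have ae1: "AE \<tau> in g x \<sigma>. (\<tau> \<in> C \<longleftrightarrow> \<sigma> \<in> C)" by (rule pk_AE_set[OF gk tx Cx'])
    have ae2: "AE \<tau> in g x \<sigma>. measure (g y \<tau>) B = measure (g y \<sigma>) B" by (rule pk_AE_fun[OF gk tx mB])
    show "AE \<tau> in g x \<sigma>. emeasure (g y \<tau>) (A \<inter> B \<inter> C) = ennreal (indicator C \<sigma> * measure (g y \<sigma>) B) * indicator A \<tau>"
      using ae1 ae2 by eventually_elim (auto simp: e1 indicator_def)
  qed
  also have "\<dots> = ennreal (indicator C \<sigma> * measure (g y \<sigma>) B) * emeasure (g x \<sigma>) A"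
    by (rule nn_integral_cmult_indicator[OF Ax])
  also have "\<dots> = ennreal (indicator C \<sigma> * measure (g y \<sigma>) B * measure (g x \<sigma>) A)"
    using prob_emeasure[OF pk_prob[OF gk tx]]
    by (simp add: ennreal_mult'' indicator_def)
  finally show ?thesis .
qed

lemma incomp_sym: "incomp x y \<Longrightarrow> incomp y x" unfolding incomp_def by auto

lemma bind_rk_sets:
  assumes "V \<subseteq> - fut {y}"
  shows "sets (bind (rk ME (g x \<sigma>) W) (\<lambda>\<tau>. rk ME (g y \<tau>) V)) = sets (FM ME V)"
  by (rule sets_bind) (auto simp: rk_sets[OF gk timebox_single assms] rk_space[OF gk timebox_single])

lemma COMM:
  assumes inc: "incomp x y" and V: "V \<subseteq> - (fut {x} \<union> fut {y})"
    and W1: "past {y} \<union> (V - {y}) \<subseteq> W" "W \<subseteq> - fut {x}"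
    and W2: "past {x} \<union> (V - {x}) \<subseteq> W'" "W' \<subseteq> - fut {y}"
  shows "bind (rk ME (g x \<sigma>) W) (\<lambda>\<tau>. rk ME (g y \<tau>) V) = bind (rk ME (g y \<sigma>) W') (\<lambda>\<tau>. rk ME (g x \<tau>) V)"
proof -
  let ?E = "Rect3 ME (V \<inter> {x}) (V \<inter> {y}) (V - {x, y})"
  have V': "V \<subseteq> - (fut {y} \<union> fut {x})" using V by auto
  have eq: "emeasure (bind (rk ME (g x \<sigma>) W) (\<lambda>\<tau>. rk ME (g y \<tau>) V)) X
      = emeasure (bind (rk ME (g y \<sigma>) W') (\<lambda>\<tau>. rk ME (g x \<tau>) V)) X" if X: "X \<in> ?E" for X
  proof -
    obtain A B C where ABC: "X = A \<inter> B \<inter> C" "A \<in> sets (FM ME (V \<inter> {x}))" "B \<in> sets (FM ME (V \<inter> {y}))"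
      "C \<in> sets (FM ME (V - {x, y}))" using X unfolding Rect3_def by auto
    have C': "C \<in> sets (FM ME (V - {y, x}))" using ABC(4) by (simp add: insert_commute)
    have "emeasure (bind (rk ME (g x \<sigma>) W) (\<lambda>\<tau>. rk ME (g y \<tau>) V)) X
        = ennreal (indicator C \<sigma> * measure (g y \<sigma>) B * measure (g x \<sigma>) A)"
      unfolding ABC(1) by (rule half[OF inc V W1 ABC(2,3,4)])
    moreover have "emeasure (bind (rk ME (g y \<sigma>) W') (\<lambda>\<tau>. rk ME (g x \<tau>) V)) (B \<inter> A \<inter> C)
        = ennreal (indicator C \<sigma> * measure (g x \<sigma>) A * measure (g y \<sigma>) B)"
      by (rule half[OF incomp_sym[OF inc] V' W2 ABC(3,2) C'])
    moreover have "B \<inter> A \<inter> C = X" using ABC(1) by auto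
    ultimately show ?thesis by (simp add: ac_simps)
  qed
  have gen: "sets (FM ME V) = sigma_sets UNIV ?E"
  proof -
    have "V = (V \<inter> {x}) \<union> (V \<inter> {y}) \<union> (V - {x, y})" by auto
    then show ?thesis using Rect3_gen[of ME "V \<inter> {x}" "V \<inter> {y}" "V - {x, y}"] by metis
  qed
  have UE: "UNIV \<in> ?E" unfolding Rect3_def by (intro CollectI exI[of _ UNIV]) auto
  show ?thesis
  proof (rule measure_eqI_generator_eq[where E="?E" and \<Omega>=UNIV and A="\<lambda>_. UNIV"])
    show "Int_stable ?E" by (rule Rect3_Int_stable)
    show "?E \<subseteq> Pow UNIV" by auto
    show "\<And>X. X \<in> ?E \<Longrightarrow> emeasure (bind (rk ME (g x \<sigma>) W) (\<lambda>\<tau>. rk ME (g y \<tau>) V)) X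
      = emeasure (bind (rk ME (g y \<sigma>) W') (\<lambda>\<tau>. rk ME (g x \<tau>) V)) X" by (rule eq)
    show "sets (bind (rk ME (g x \<sigma>) W) (\<lambda>\<tau>. rk ME (g y \<tau>) V)) = sigma_sets UNIV ?E"
      using bind_rk_sets[of V y x \<sigma> W] V gen by auto
    show "sets (bind (rk ME (g y \<sigma>) W') (\<lambda>\<tau>. rk ME (g x \<tau>) V)) = sigma_sets UNIV ?E"
      using bind_rk_sets[of V x y \<sigma> W'] V gen by auto
    show "range (\<lambda>_. UNIV) \<subseteq> ?E" using UE by auto
    show "(\<Union>i::nat. UNIV) = UNIV" by auto
    obtain A B C where ABC: "UNIV = A \<inter> B \<inter> C" "A \<in> sets (FM ME (V \<inter> {x}))" "B \<in> sets (FM ME (V \<inter> {y}))"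
      "C \<in> sets (FM ME (V - {x, y}))" using UE unfolding Rect3_def by blast
    show "emeasure (bind (rk ME (g x \<sigma>) W) (\<lambda>\<tau>. rk ME (g y \<tau>) V)) UNIV \<noteq> \<infinity>" for i :: nat
      unfolding ABC(1) half[OF inc V W1 ABC(2,3,4)] by simp
  qed
qed

end


definition cm :: "'s::order set \<Rightarrow> 's" where "cm L = (SOME x. x \<in> maxs L)"

primrec gamn :: "'e measure \<Rightarrow> ('s::order \<Rightarrow> ('s \<Rightarrow> 'e) \<Rightarrow> ('s \<Rightarrow> 'e) measure) \<Rightarrow> nat \<Rightarrow> 's set \<Rightarrow> ('s \<Rightarrow> 'e) \<Rightarrow> ('s \<Rightarrow> 'e) measure" where
  "gamn ME g 0 L = (\<lambda>\<omega>. return (FM ME UNIV) \<omega>)"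
| "gamn ME g (Suc n) L = comp ME g (gamn ME g n (L - {cm L})) (cm L) L"

definition gam where "gam ME g L = gamn ME g (card L) L"

lemma cm_maxs: "finite L \<Longrightarrow> L \<noteq> {} \<Longrightarrow> cm L \<in> maxs L"
  unfolding cm_def using maxs_nonempty by (metis someI_ex)

lemma gam_empty: "gam ME g {} = (\<lambda>\<omega>. return (FM ME UNIV) \<omega>)" by (simp add: gam_def)

lemma gam_rec: assumes "finite L" "L \<noteq> {}"
  shows "gam ME g L = comp ME g (gam ME g (L - {cm L})) (cm L) L"
proof -
  have "cm L \<in> L" using cm_maxs[OF assms] maxsD by auto
  moreover have "0 < card L" using assms by (simp add: card_gt_0_iff)
  ultimately have "card L = Suc (card (L - {cm L}))" using assms by simp
  then show ?thesis by (simp add: gam_def)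
qed

lemma empty_sets: "fut {} = {}" "past {} = {}" "outer {} = UNIV"
  unfolding fut_def past_def outer_def by auto

lemma ret_proper: "proper_kernel ME {} (\<lambda>\<omega>. return (FM ME UNIV) \<omega>)"
  unfolding proper_kernel_def empty_sets
proof (intro conjI ballI allI)
  fix \<omega>
  show "prob_space (return (FM ME UNIV) \<omega>)" by (rule prob_space_return) simp
  show "space (return (FM ME UNIV) \<omega>) = UNIV" by simp
  show "sets (return (FM ME UNIV) \<omega>) = sets (FM ME (- {}))" by simp
next
  fix A assume A: "A \<in> sets (FM ME (- {}))"
  then show "(\<lambda>\<omega>. measure (return (FM ME UNIV) \<omega>) A) \<in> borel_measurable (FM ME ({} \<union> UNIV))"
    by (simp add: measure_return borel_measurable_indicator)
next
  fix A assume A: "A \<in> sets (FM ME {})"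
  then have A': "A \<in> sets (FM ME UNIV)" using FM_mono[of "{}" UNIV ME] by auto
  show "(\<lambda>\<omega>. measure (return (FM ME UNIV) \<omega>) A) \<in> borel_measurable (FM ME {})"
    using A by (simp add: measure_return[OF A'] borel_measurable_indicator)
next
  fix B \<omega> assume "B \<in> sets (FM ME ({} \<union> UNIV))"
  then show "measure (return (FM ME UNIV) \<omega>) B = indicator B \<omega>" by (simp add: measure_return)
qed

context
  fixes ME :: "'e measure" and g :: "'s::order \<Rightarrow> ('s \<Rightarrow> 'e) \<Rightarrow> ('s \<Rightarrow> 'e) measure"
  assumes gk: "\<And>x. proper_kernel ME {x} (g x)"
begin

lemma gam_proper: "timebox L \<Longrightarrow> proper_kernel ME L (gam ME g L)"
proof (induction "card L" arbitrary: L)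
  case 0
  then have "L = {}" unfolding timebox_def by auto
  then show ?case using ret_proper by (simp add: gam_empty)
next
  case (Suc n)
  then have fin: "finite L" and ne: "L \<noteq> {}" unfolding timebox_def by auto
  note cmm = cm_maxs[OF fin ne]
  have "cm L \<in> L" by (rule maxsD(1)[OF cmm])
  then have "card (L - {cm L}) = n" using Suc(2) fin by simp
  then have pk: "proper_kernel ME (L - {cm L}) (gam ME g (L - {cm L}))"
    using Suc(1) T1[OF Suc(3) cmm] by auto
  show ?case unfolding gam_rec[OF fin ne] by (rule comp_proper[OF gk Suc(3) cmm pk])
qed

lemma maxs_Diff: "x \<in> maxs L \<Longrightarrow> x \<noteq> c \<Longrightarrow> x \<in> maxs (L - {c})"
  unfolding maxs_def by auto

lemma maxs_incomp: "x \<in> maxs L \<Longrightarrow> c \<in> maxs L \<Longrightarrow> x \<noteq> c \<Longrightarrow> incomp x c"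
  unfolding maxs_def incomp_def by (auto simp: order.order_iff_strict)

lemma DEC: "timebox L \<Longrightarrow> x \<in> maxs L \<Longrightarrow> gam ME g L = comp ME g (gam ME g (L - {x})) x L"
proof (induction "card L" arbitrary: L x rule: less_induct)
  case less
  note tb = less.prems(1) and xm = less.prems(2)
  have fin: "finite L" using tb unfolding timebox_def by auto
  have ne: "L \<noteq> {}" using xm maxsD by auto
  define c where "c = cm L"
  have cm: "c \<in> maxs L" unfolding c_def by (rule cm_maxs[OF fin ne])
  show ?case
  proof (cases "x = c")
    case True then show ?thesis using gam_rec[OF fin ne] c_def by simp
  next
    case False
    have inc: "incomp x c" by (rule maxs_incomp[OF xm cm False])
    define L1 where "L1 = L - {c}"
    define Lx where "Lx = L - {x}"
    define L2 where "L2 = L - {c} - {x}"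
    have L2': "Lx - {c} = L2" "L1 - {x} = L2" unfolding L2_def Lx_def L1_def by auto
    have tb1: "timebox L1" unfolding L1_def by (rule T1[OF tb cm])
    have tbx: "timebox Lx" unfolding Lx_def by (rule T1[OF tb xm])
    have xm1: "x \<in> maxs L1" unfolding L1_def by (rule maxs_Diff[OF xm False])
    have cmx: "c \<in> maxs Lx" unfolding Lx_def using maxs_Diff[OF cm] False by auto
    have tb2: "timebox L2" using T1[OF tb1 xm1] L2' by simp
    have cL: "c \<in> L" "x \<in> L" using cm xm maxsD by auto
    have c1: "card L1 < card L" unfolding L1_def using fin cL(1) by (rule card_Diff1_less)
    have cx: "card Lx < card L" unfolding Lx_def using fin cL(2) by (rule card_Diff1_less)
    have IH1: "gam ME g L1 = comp ME g (gam ME g L2) x L1"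
      using less.hyps[OF c1 tb1 xm1] L2' by simp
    have IHx: "gam ME g Lx = comp ME g (gam ME g L2) c Lx"
      using less.hyps[OF cx tbx cmx] L2' by simp
    have pk2: "proper_kernel ME L2 (gam ME g L2)" by (rule gam_proper[OF tb2])
    have pk1: "proper_kernel ME (L - {c}) (gam ME g L1)" unfolding L1_def by (rule gam_proper[OF T1[OF tb cm]])
    have pkx: "proper_kernel ME (L - {x}) (gam ME g Lx)" unfolding Lx_def by (rule gam_proper[OF T1[OF tb xm]])
    have pk2a: "proper_kernel ME (L1 - {x}) (gam ME g L2)" using pk2 L2' by simp
    have pk2b: "proper_kernel ME (Lx - {c}) (gam ME g L2)" using pk2 L2' by simp
    have mx1: "(\<lambda>\<sigma>. rk ME (g x \<sigma>) (- fut L1)) \<in> measurable (gam ME g L2 \<omega>) (subprob_algebra (FM ME (- fut L1)))" for \<omega>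
      by (rule Kx'[OF gk tb1 xm1 pk2a])
    have mc2: "(\<lambda>\<sigma>. rk ME (g c \<sigma>) (- fut Lx)) \<in> measurable (gam ME g L2 \<omega>) (subprob_algebra (FM ME (- fut Lx)))" for \<omega>
      by (rule Kx'[OF gk tbx cmx pk2b])
    have mc: "(\<lambda>\<sigma>. rk ME (g c \<sigma>) (- fut L)) \<in> measurable (FM ME (- fut L1)) (subprob_algebra (FM ME (- fut L)))"
      unfolding L1_def by (rule measurable_FM_mono[OF Tx_sub[OF gk tb cm pk1] Kx[OF gk tb cm pk1]])
    have mx: "(\<lambda>\<sigma>. rk ME (g x \<sigma>) (- fut L)) \<in> measurable (FM ME (- fut Lx)) (subprob_algebra (FM ME (- fut L)))"
      unfolding Lx_def by (rule measurable_FM_mono[OF Tx_sub[OF gk tb xm pkx] Kx[OF gk tb xm pkx]])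
    have V: "- fut L \<subseteq> - (fut {x} \<union> fut {c})" using T4[OF tb xm] T4[OF tb cm] by auto
    have W1: "past {c} \<union> (- fut L - {c}) \<subseteq> - fut L1" "- fut L1 \<subseteq> - fut {x}"
      using Tx_sub[OF gk tb cm pk1] T4[OF tb1 xm1] unfolding L1_def by auto
    have W2: "past {x} \<union> (- fut L - {x}) \<subseteq> - fut Lx" "- fut Lx \<subseteq> - fut {c}"
      using Tx_sub[OF gk tb xm pkx] T4[OF tbx cmx] unfolding Lx_def by auto
    show ?thesis
    proof
      fix \<omega>
      have "gam ME g L \<omega> = bind (gam ME g L1 \<omega>) (\<lambda>\<tau>. rk ME (g c \<tau>) (- fut L))"
        using gam_rec[OF fin ne, of ME g] unfolding c_def L1_def comp_def by simp
      also have "\<dots> = bind (bind (gam ME g L2 \<omega>) (\<lambda>\<sigma>. rk ME (g x \<sigma>) (- fut L1))) (\<lambda>\<tau>. rk ME (g c \<tau>) (- fut L))"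
        unfolding IH1 comp_def ..
      also have "\<dots> = bind (gam ME g L2 \<omega>) (\<lambda>\<sigma>. bind (rk ME (g x \<sigma>) (- fut L1)) (\<lambda>\<tau>. rk ME (g c \<tau>) (- fut L)))"
        by (rule bind_assoc[OF mx1 mc])
      also have "\<dots> = bind (gam ME g L2 \<omega>) (\<lambda>\<sigma>. bind (rk ME (g c \<sigma>) (- fut Lx)) (\<lambda>\<tau>. rk ME (g x \<tau>) (- fut L)))"
        by (rule bind_cong[OF refl]) (rule COMM[OF gk inc V W1 W2])
      also have "\<dots> = bind (bind (gam ME g L2 \<omega>) (\<lambda>\<sigma>. rk ME (g c \<sigma>) (- fut Lx))) (\<lambda>\<tau>. rk ME (g x \<tau>) (- fut L))"
        by (rule bind_assoc[OF mc2 mx, symmetric])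
      also have "\<dots> = comp ME g (gam ME g Lx) x L \<omega>"
        unfolding IHx comp_def ..
      finally show "gam ME g L \<omega> = comp ME g (gam ME g (L - {x})) x L \<omega>" unfolding Lx_def .
    qed
  qed
qed

end


lemma int_bound:
  fixes h :: "'a \<Rightarrow> real"
  assumes "prob_space M" "\<And>z. \<bar>h z\<bar> \<le> B"
  shows "\<bar>\<integral>z. h z \<partial>M\<bar> \<le> B"
proof -
  interpret prob_space M by fact
  have B0: "0 \<le> B" using assms(2)[of undefined] by auto
  have "\<bar>\<integral>z. h z \<partial>M\<bar> \<le> (\<integral>z. \<bar>h z\<bar> \<partial>M)" by simp
  also have "\<dots> \<le> (\<integral>z. B \<partial>M)"
    by (rule integral_mono_AE') (auto simp: assms B0)
  finally show ?thesis by (simp add: prob_space)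
qed

context
  fixes ME :: "'e measure" and g :: "'s::order \<Rightarrow> ('s \<Rightarrow> 'e) \<Rightarrow> ('s \<Rightarrow> 'e) measure"
  assumes gk: "\<And>x. proper_kernel ME {x} (g x)"
begin

lemma BI:
  fixes h :: "('s \<Rightarrow> 'e) \<Rightarrow> real"
  assumes V: "V \<subseteq> - fut {y}" and W1: "past {y} \<union> (V - {y}) \<subseteq> W" and W2: "W \<subseteq> - fut {x}"
    and h: "h \<in> borel_measurable (FM ME V)" and hb: "\<And>z. \<bar>h z\<bar> \<le> B"
  shows "(\<integral>z. h z \<partial>bind (rk ME (g x \<tau>) W) (\<lambda>\<rho>. rk ME (g y \<rho>) V)) = (\<integral>\<rho>. (\<integral>z. h z \<partial>g y \<rho>) \<partial>g x \<tau>)"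
proof -
  note tx = timebox_single[of x] and ty = timebox_single[of y]
  have Ky: "(\<lambda>\<tau>. rk ME (g y \<tau>) V) \<in> measurable (FM ME (past {y} \<union> (V - {y}))) (subprob_algebra (FM ME V))"
    by (rule K3[OF gk ty V])
  have Ky': "(\<lambda>\<tau>. rk ME (g y \<tau>) V) \<in> measurable (rk ME (g x \<tau>) W) (subprob_algebra (FM ME V))"
    using measurable_FM_mono[OF W1 Ky] rk_sets[OF gk tx W2] by (simp cong: measurable_cong_sets)
  interpret prob_space "rk ME (g x \<tau>) W" by (rule rk_prob[OF gk tx W2])
  have "(\<integral>z. h z \<partial>bind (rk ME (g x \<tau>) W) (\<lambda>\<rho>. rk ME (g y \<rho>) V)) = (\<integral>\<rho>. (\<integral>z. h z \<partial>rk ME (g y \<rho>) V) \<partial>rk ME (g x \<tau>) W)"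
  proof (rule integral_bind[where K="FM ME V" and B=B and B'=1])
    show "h \<in> borel_measurable (FM ME V)" by (rule h)
    show "(\<lambda>\<rho>. rk ME (g y \<rho>) V) \<in> measurable (rk ME (g x \<tau>) W) (subprob_algebra (FM ME V))" by (rule Ky')
    show "\<And>z. z \<in> space (FM ME V) \<Longrightarrow> \<bar>h z\<bar> \<le> B" using hb by auto
    show "finite_measure (rk ME (g x \<tau>) W)" by unfold_locales
    show "AE z in rk ME (g x \<tau>) W. emeasure (rk ME (g y z) V) (space (rk ME (g y z) V)) \<le> ennreal 1"
      using prob_space.emeasure_space_1[OF rk_prob[OF gk ty V]] by simp
  qed
  also have "\<dots> = (\<integral>\<rho>. (\<integral>z. h z \<partial>g y \<rho>) \<partial>rk ME (g x \<tau>) W)"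
    using rk_integral[OF gk ty V h] by simp
  also have "\<dots> = (\<integral>\<rho>. (\<integral>z. h z \<partial>g y \<rho>) \<partial>g x \<tau>)"
    by (rule rk_integral[OF gk tx W2 measurable_FM_mono[OF W1 K4[OF gk ty V h]]])
  finally show ?thesis .
qed

lemma SWAPI:
  fixes h :: "('s \<Rightarrow> 'e) \<Rightarrow> real"
  assumes inc: "incomp x y" and V: "V \<subseteq> - (fut {x} \<union> fut {y})"
    and h: "h \<in> borel_measurable (FM ME V)" and hb: "\<And>z. \<bar>h z\<bar> \<le> B"
  shows "(\<integral>\<rho>. (\<integral>z. h z \<partial>g y \<rho>) \<partial>g x \<tau>) = (\<integral>\<rho>. (\<integral>z. h z \<partial>g x \<rho>) \<partial>g y \<tau>)"
proof -
  have W1: "past {y} \<union> (V - {y}) \<subseteq> - fut {x}"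
    using inc V unfolding incomp_def past_def fut_def by (auto dest: order.strict_trans order.strict_implies_order)
  have W2: "past {x} \<union> (V - {x}) \<subseteq> - fut {y}"
    using inc V unfolding incomp_def past_def fut_def by (auto dest: order.strict_trans order.strict_implies_order)
  have Vx: "V \<subseteq> - fut {x}" and Vy: "V \<subseteq> - fut {y}" using V by auto
  have "(\<integral>\<rho>. (\<integral>z. h z \<partial>g y \<rho>) \<partial>g x \<tau>)
      = (\<integral>z. h z \<partial>bind (rk ME (g x \<tau>) (past {y} \<union> (V - {y}))) (\<lambda>\<rho>. rk ME (g y \<rho>) V))"
    by (rule BI[OF Vy order.refl W1 h hb, symmetric])
  also have "\<dots> = (\<integral>z. h z \<partial>bind (rk ME (g y \<tau>) (past {x} \<union> (V - {x}))) (\<lambda>\<rho>. rk ME (g x \<rho>) V))"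
    by (rule arg_cong[OF COMM[OF gk inc V order.refl W1 order.refl W2]])
  also have "\<dots> = (\<integral>\<rho>. (\<integral>z. h z \<partial>g x \<rho>) \<partial>g y \<tau>)"
    by (rule BI[OF Vx order.refl W2 h hb])
  finally show ?thesis .
qed

lemma gam_int:
  fixes h :: "('s \<Rightarrow> 'e) \<Rightarrow> real"
  assumes tb: "timebox L" and xm: "x \<in> maxs L"
    and h: "h \<in> borel_measurable (FM ME (- fut L))" and hb: "\<And>z. \<bar>h z\<bar> \<le> B"
  shows "(\<integral>z. h z \<partial>gam ME g L \<omega>) = (\<integral>\<sigma>. (\<integral>z. h z \<partial>g x \<sigma>) \<partial>gam ME g (L - {x}) \<omega>)"
  unfolding DEC[OF gk tb xm]
  by (rule comp_int[OF gk tb xm gam_proper[OF gk T1[OF tb xm]] h hb])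

lemma gk_bound: "(\<And>z. \<bar>h z\<bar> \<le> B) \<Longrightarrow> \<bar>\<integral>z. (h z :: real) \<partial>g x \<sigma>\<bar> \<le> B"
  by (rule int_bound[OF pk_prob[OF gk timebox_single]])

lemma past_fut_in: "timebox D \<Longrightarrow> y \<in> D \<Longrightarrow> past {y} \<inter> fut D = {}"
  unfolding timebox_def past_def fut_def by auto

lemma C1:
  fixes h :: "('s \<Rightarrow> 'e) \<Rightarrow> real"
  assumes "timebox D" "y \<in> D" "h \<in> borel_measurable (FM ME (- (fut {y} \<union> fut D)))" "\<And>z. \<bar>h z\<bar> \<le> B"
  shows "(\<integral>\<sigma>. (\<integral>z. h z \<partial>g y \<sigma>) \<partial>gam ME g D \<omega>) = (\<integral>z. h z \<partial>gam ME g D \<omega>)"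
  using assms
proof (induction "card D" arbitrary: D y h B \<omega> rule: less_induct)
  case less
  note tb = less.prems(1) and yD = less.prems(2) and h = less.prems(3) and hb = less.prems(4)
  let ?V = "- (fut {y} \<union> fut D)"
  have fin: "finite D" using tb unfolding timebox_def by auto
  have ne: "D \<noteq> {}" using yD by auto
  define x where "x = cm D"
  have xm: "x \<in> maxs D" unfolding x_def by (rule cm_maxs[OF fin ne])
  have xD: "x \<in> D" using xm maxsD by auto
  define D' where "D' = D - {x}"
  have tb': "timebox D'" unfolding D'_def by (rule T1[OF tb xm])
  have cD: "card D' < card D" unfolding D'_def using fin xD by (rule card_Diff1_less)
  have pk': "proper_kernel ME D' (gam ME g D')" by (rule gam_proper[OF gk tb'])
  have Vy: "?V \<subseteq> - fut {y}" by auto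
  have pfy: "past {y} \<inter> fut D = {}" by (rule past_fut_in[OF tb yD])
  define h' where "h' = (\<lambda>\<sigma>. \<integral>z. h z \<partial>g y \<sigma>)"
  have h'm: "h' \<in> borel_measurable (FM ME (past {y} \<union> (?V - {y})))"
    unfolding h'_def by (rule K4[OF gk timebox_single Vy h])
  have h'b: "\<And>z. \<bar>h' z\<bar> \<le> B" unfolding h'_def by (rule gk_bound[OF hb])
  have h'D: "h' \<in> borel_measurable (FM ME (- fut D))"
    by (rule measurable_FM_mono[OF _ h'm]) (use pfy in auto)
  have hD: "h \<in> borel_measurable (FM ME (- fut D))"
    by (rule measurable_FM_mono[OF _ h]) auto
  have LHS: "(\<integral>\<sigma>. h' \<sigma> \<partial>gam ME g D \<omega>) = (\<integral>\<tau>. (\<integral>\<sigma>. h' \<sigma> \<partial>g x \<tau>) \<partial>gam ME g D' \<omega>)"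
    unfolding D'_def by (rule gam_int[OF tb xm h'D h'b])
  have RHS: "(\<integral>\<sigma>. h \<sigma> \<partial>gam ME g D \<omega>) = (\<integral>\<tau>. (\<integral>\<sigma>. h \<sigma> \<partial>g x \<tau>) \<partial>gam ME g D' \<omega>)"
    unfolding D'_def by (rule gam_int[OF tb xm hD hb])
  have fD': "fut D' \<subseteq> fut D \<union> {x}" unfolding D'_def by (rule T2[OF tb xm])
  show ?case
  proof (cases "y = x")
    case True
    have "past {x} \<union> (?V - {x}) \<subseteq> past {x} \<union> outer {x}" using T7[of "{x}"] True by auto
    then have h'po: "h' \<in> borel_measurable (FM ME (past {x} \<union> outer {x}))"
      using measurable_FM_mono h'm True by blast
    have "(\<integral>\<tau>. (\<integral>\<sigma>. h' \<sigma> \<partial>g x \<tau>) \<partial>gam ME g D' \<omega>) = (\<integral>\<tau>. h' \<tau> \<partial>gam ME g D' \<omega>)"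
      using pk_integral_const[OF gk timebox_single h'po] by simp
    then show ?thesis using LHS RHS True unfolding h'_def by simp
  next
    case False
    have yD': "y \<in> D'" using yD False unfolding D'_def by auto
    show ?thesis
    proof (cases "y < x")
      case True
      have xV: "x \<notin> ?V" using True unfolding fut_def by auto
      have Vpo: "?V \<subseteq> past {x} \<union> outer {x}"
      proof
        fix z assume z: "z \<in> ?V"
        have "z \<noteq> x" using z xV by auto
        moreover have "\<not> x < z"
        proof
          assume "x < z"
          then have "z \<notin> D" using maxsD(2)[OF xm] by auto
          then have "z \<in> fut D" using \<open>x < z\<close> xD unfolding fut_def by auto
          then show False using z by auto
        qed
        ultimately show "z \<in> past {x} \<union> outer {x}" unfolding past_def outer_def by (auto simp: order.order_iff_strict)
      qed
      have hpo: "h \<in> borel_measurable (FM ME (past {x} \<union> outer {x}))"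
        using measurable_FM_mono[OF Vpo h] .
      have "past {y} \<union> (?V - {y}) \<subseteq> past {x} \<union> outer {x}"
        using Vpo True unfolding past_def by (auto dest: order.strict_trans)
      then have h'po: "h' \<in> borel_measurable (FM ME (past {x} \<union> outer {x}))"
        using measurable_FM_mono h'm by blast
      have hD': "h \<in> borel_measurable (FM ME (- (fut {y} \<union> fut D')))"
        by (rule measurable_FM_mono[OF _ h]) (use fD' xV in auto)
      have "(\<integral>\<sigma>. h' \<sigma> \<partial>gam ME g D \<omega>) = (\<integral>\<tau>. h' \<tau> \<partial>gam ME g D' \<omega>)"
        using LHS pk_integral_const[OF gk timebox_single h'po] by simp
      also have "\<dots> = (\<integral>\<tau>. h \<tau> \<partial>gam ME g D' \<omega>)"
        unfolding h'_def by (rule less.hyps[OF cD tb' yD' hD' hb])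
      also have "\<dots> = (\<integral>\<sigma>. h \<sigma> \<partial>gam ME g D \<omega>)"
        using RHS pk_integral_const[OF gk timebox_single hpo] by simp
      finally show ?thesis unfolding h'_def .
    next
      case nl: False
      have inc: "incomp x y"
        using nl False xm yD unfolding incomp_def maxs_def by (auto simp: order.order_iff_strict)
      have Vxy: "?V \<subseteq> - (fut {x} \<union> fut {y})" using T4[OF tb xm] by auto
      define h'' where "h'' = (\<lambda>\<sigma>. \<integral>z. h z \<partial>g x \<sigma>)"
      have Vx: "?V \<subseteq> - fut {x}" using Vxy by auto
      have h''m: "h'' \<in> borel_measurable (FM ME (past {x} \<union> (?V - {x})))"
        unfolding h''_def by (rule K4[OF gk timebox_single Vx h])
      have h''b: "\<And>z. \<bar>h'' z\<bar> \<le> B" unfolding h''_def by (rule gk_bound[OF hb])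
      have sub: "past {x} \<union> (?V - {x}) \<subseteq> - (fut {y} \<union> fut D')"
        using inc T8[OF tb xm] fD' unfolding D'_def incomp_def past_def fut_def
        by (auto dest: order.strict_implies_order)
      have h''D': "h'' \<in> borel_measurable (FM ME (- (fut {y} \<union> fut D')))"
        by (rule measurable_FM_mono[OF sub h''m])
      have "(\<integral>\<sigma>. h' \<sigma> \<partial>gam ME g D \<omega>) = (\<integral>\<tau>. (\<integral>\<sigma>. h'' \<sigma> \<partial>g y \<tau>) \<partial>gam ME g D' \<omega>)"
        using LHS SWAPI[OF inc Vxy h hb] unfolding h'_def h''_def by simp
      also have "\<dots> = (\<integral>\<tau>. h'' \<tau> \<partial>gam ME g D' \<omega>)"
        by (rule less.hyps[OF cD tb' yD' h''D' h''b])
      also have "\<dots> = (\<integral>\<sigma>. h \<sigma> \<partial>gam ME g D \<omega>)"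
        unfolding RHS h''_def ..
      finally show ?thesis unfolding h'_def .
    qed
  qed
qed

end


lemma space_OmegaM: "space ME = UNIV \<Longrightarrow> space (OmegaM ME) = UNIV"
  by (simp add: OmegaM_def space_PiM)

context
  fixes ME :: "'e measure" and g :: "'s::order \<Rightarrow> ('s \<Rightarrow> 'e) \<Rightarrow> ('s \<Rightarrow> 'e) measure"
  assumes gk: "\<And>x. proper_kernel ME {x} (g x)"
begin

lemma CONS:
  fixes h :: "('s \<Rightarrow> 'e) \<Rightarrow> real"
  assumes "timebox L" "timebox D" "L \<subseteq> D" "h \<in> borel_measurable (FM ME (- (fut L \<union> fut D)))" "\<And>z. \<bar>h z\<bar> \<le> B"
  shows "(\<integral>\<sigma>. (\<integral>z. h z \<partial>gam ME g L \<sigma>) \<partial>gam ME g D \<omega>) = (\<integral>z. h z \<partial>gam ME g D \<omega>)"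
  using assms
proof (induction "card L" arbitrary: L h B rule: less_induct)
  case less
  note tbL = less.prems(1) and tbD = less.prems(2) and LD = less.prems(3) and h = less.prems(4) and hb = less.prems(5)
  let ?V = "- (fut L \<union> fut D)"
  show ?case
  proof (cases "L = {}")
    case True
    have hU: "h \<in> borel_measurable (FM ME UNIV)" by (rule measurable_FM_mono[OF _ h]) auto
    have "(\<integral>z. h z \<partial>gam ME g L \<sigma>) = h \<sigma>" for \<sigma>
      unfolding True gam_empty by (rule integral_return) (auto simp: hU)
    then show ?thesis by simp
  next
    case False
    have fin: "finite L" using tbL unfolding timebox_def by auto
    define y where "y = cm L"
    have ym: "y \<in> maxs L" unfolding y_def by (rule cm_maxs[OF fin False])
    have yL: "y \<in> L" using ym maxsD by auto
    define L' where "L' = L - {y}"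
    have tb': "timebox L'" unfolding L'_def by (rule T1[OF tbL ym])
    have cL: "card L' < card L" unfolding L'_def using fin yL by (rule card_Diff1_less)
    have LD': "L' \<subseteq> D" using LD unfolding L'_def by auto
    have hL: "h \<in> borel_measurable (FM ME (- fut L))" by (rule measurable_FM_mono[OF _ h]) auto
    have Vy: "?V \<subseteq> - fut {y}" using T4[OF tbL ym] by auto
    define h' where "h' = (\<lambda>\<sigma>. \<integral>z. h z \<partial>g y \<sigma>)"
    have h'm: "h' \<in> borel_measurable (FM ME (past {y} \<union> (?V - {y})))"
      unfolding h'_def by (rule K4[OF gk timebox_single Vy h])
    have h'b: "\<And>z. \<bar>h' z\<bar> \<le> B" unfolding h'_def by (rule gk_bound[OF gk hb])
    have sub: "past {y} \<union> (?V - {y}) \<subseteq> - (fut L' \<union> fut D)"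
      using T8[OF tbL ym] past_fut_in[OF gk tbD] yL LD T2[OF tbL ym] unfolding L'_def by blast
    have h'L': "h' \<in> borel_measurable (FM ME (- (fut L' \<union> fut D)))" by (rule measurable_FM_mono[OF sub h'm])
    have hy: "h \<in> borel_measurable (FM ME (- (fut {y} \<union> fut D)))"
      by (rule measurable_FM_mono[OF _ h]) (use T4[OF tbL ym] in auto)
    have "(\<integral>\<sigma>. (\<integral>z. h z \<partial>gam ME g L \<sigma>) \<partial>gam ME g D \<omega>) = (\<integral>\<sigma>. (\<integral>z. h' z \<partial>gam ME g L' \<sigma>) \<partial>gam ME g D \<omega>)"
      unfolding h'_def L'_def using gam_int[OF gk tbL ym hL hb] by simp
    also have "\<dots> = (\<integral>z. h' z \<partial>gam ME g D \<omega>)"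
      by (rule less.hyps[OF cL tb' tbD LD' h'L' h'b])
    also have "\<dots> = (\<integral>z. h z \<partial>gam ME g D \<omega>)"
      unfolding h'_def by (rule C1[OF gk tbD _ hy hb]) (use yL LD in auto)
    finally show ?thesis .
  qed
qed

lemma POS_gam: "POS ME (gam ME g)"
  unfolding POS_def
proof (intro conjI allI impI)
  fix L :: "'s set" assume "timebox L" then show "proper_kernel ME L (gam ME g L)" by (rule gam_proper[OF gk])
next
  fix L D :: "'s set" and h :: "('s \<Rightarrow> 'e) \<Rightarrow> real" and \<omega>
  assume tbL: "timebox L" and tbD: "timebox D" and LD: "L \<subseteq> D"
    and h: "h \<in> borel_measurable (FM ME (- (fut L \<union> fut D)))" and b: "bounded (range h)"
  obtain B where "\<forall>z\<in>range h. norm z \<le> B" using b unfolding bounded_iff by auto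
  then have hb: "\<And>z. \<bar>h z\<bar> \<le> B" by auto
  show "(\<integral>\<sigma>. (\<integral>\<xi>. h \<xi> \<partial>gam ME g L \<sigma>) \<partial>gam ME g D \<omega>) = (\<integral>\<xi>. h \<xi> \<partial>gam ME g D \<omega>)"
    by (rule CONS[OF tbL tbD LD h hb])
qed

lemma gam_single: "gam ME g {x} = g x"
proof
  fix \<omega>
  have cmx: "cm {x} = x" using cm_maxs[of "{x}"] maxsD by auto
  have K: "(\<lambda>\<sigma>. rk ME (g x \<sigma>) (- fut {x})) \<in> measurable (FM ME UNIV) (subprob_algebra (FM ME (- fut {x})))"
    by (rule measurable_FM_mono[OF _ K3[OF gk timebox_single order.refl]]) auto
  have "gam ME g {x} \<omega> = bind (return (FM ME UNIV) \<omega>) (\<lambda>\<sigma>. rk ME (g x \<sigma>) (- fut {x}))"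
    using gam_rec[of "{x}" ME g] cmx by (simp add: comp_def gam_empty)
  also have "\<dots> = rk ME (g x \<omega>) (- fut {x})" by (rule bind_return[OF K]) simp
  also have "\<dots> = g x \<omega>"
  proof -
    have s: "sets (FM ME (- fut {x})) = sets (g x \<omega>)" using pk_sets[OF gk timebox_single] by simp
    show ?thesis unfolding rk_def restr_to_subalg_def s measure_of_of_measure ..
  qed
  finally show "gam ME g {x} \<omega> = g x \<omega>" .
qed

lemma pk_eqI:
  assumes k1: "proper_kernel ME L k1" and k2: "proper_kernel ME L k2" and tb: "timebox L"
    and eq: "\<And>\<omega> A. A \<in> sets (FM ME (- fut L)) \<Longrightarrow> measure (k1 \<omega>) A = measure (k2 \<omega>) A"
  shows "k1 = k2"
proof
  fix \<omega>
  show "k1 \<omega> = k2 \<omega>"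
  proof (rule measure_eqI)
    show "sets (k1 \<omega>) = sets (k2 \<omega>)" using pk_sets[OF k1 tb] pk_sets[OF k2 tb] by simp
    fix A assume "A \<in> sets (k1 \<omega>)"
    then have A: "A \<in> sets (FM ME (- fut L))" using pk_sets[OF k1 tb] by simp
    show "emeasure (k1 \<omega>) A = emeasure (k2 \<omega>) A"
      using eq[OF A] prob_emeasure[OF pk_prob[OF k1 tb]] prob_emeasure[OF pk_prob[OF k2 tb]] by simp
  qed
qed

lemma UNIQ:
  assumes pos: "POS ME \<gamma>'" and single: "\<And>x. \<gamma>' {x} = g x"
  shows "timebox L \<Longrightarrow> \<gamma>' L = gam ME g L"
proof (induction "card L" arbitrary: L rule: less_induct)
  case less
  note tb = less.prems
  have pk': "proper_kernel ME L (\<gamma>' L)" using pos tb unfolding POS_def by auto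
  have pk: "proper_kernel ME L (gam ME g L)" by (rule gam_proper[OF gk tb])
  have cons: "\<And>L D h \<omega>. timebox L \<Longrightarrow> timebox D \<Longrightarrow> L \<subseteq> D \<Longrightarrow>
        h \<in> borel_measurable (FM ME (- (fut L \<union> fut D))) \<Longrightarrow> bounded (range h) \<Longrightarrow>
        (\<integral>\<sigma>. (\<integral>\<xi>. h \<xi> \<partial>\<gamma>' L \<sigma>) \<partial>\<gamma>' D \<omega>) = (\<integral>\<xi>. (h \<xi> :: real) \<partial>\<gamma>' D \<omega>)"
    using pos unfolding POS_def by blast
  show ?case
  proof (cases "L = {}")
    case True
    show ?thesis
    proof (rule pk_eqI[OF pk' pk tb])
      fix \<omega> A assume A: "A \<in> sets (FM ME (- fut L))"
      then have A': "A \<in> sets (FM ME (past L \<union> outer L))" using True by (simp add: empty_sets)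
      show "measure (\<gamma>' L \<omega>) A = measure (gam ME g L \<omega>) A"
        using pk_d[OF pk' tb A'] pk_d[OF pk tb A'] by simp
    qed
  next
    case False
    have fin: "finite L" using tb unfolding timebox_def by auto
    define x where "x = cm L"
    have xm: "x \<in> maxs L" unfolding x_def by (rule cm_maxs[OF fin False])
    have xL: "x \<in> L" using xm maxsD by auto
    define L' where "L' = L - {x}"
    have tb': "timebox L'" unfolding L'_def by (rule T1[OF tb xm])
    have cL: "card L' < card L" unfolding L'_def using fin xL by (rule card_Diff1_less)
    have IH: "\<gamma>' L' = gam ME g L'" by (rule less.hyps[OF cL tb'])
    have pkL': "proper_kernel ME L' (gam ME g L')" by (rule gam_proper[OF gk tb'])
    show ?thesis
    proof (rule pk_eqI[OF pk' pk tb])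
      fix \<omega> A assume A: "A \<in> sets (FM ME (- fut L))"
      define h where "h = (indicator A :: ('s \<Rightarrow> 'e) \<Rightarrow> real)"
      have hm: "h \<in> borel_measurable (FM ME (- fut L))" unfolding h_def by (rule borel_measurable_indicator[OF A])
      have hb: "\<And>z. \<bar>h z\<bar> \<le> 1" unfolding h_def by (simp add: indicator_def)
      have hbd: "bounded (range h)" using hb unfolding bounded_iff by auto
      have fx: "fut {x} \<subseteq> fut L" by (rule T4[OF tb xm])
      have hm1: "h \<in> borel_measurable (FM ME (- (fut {x} \<union> fut L)))" using hm fx by (simp add: Un_absorb1)
      have futx: "- fut L \<subseteq> - fut {x}" using fx by auto
      define h1 where "h1 = (\<lambda>\<sigma>. \<integral>\<xi>. h \<xi> \<partial>g x \<sigma>)"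
      have h1m: "h1 \<in> borel_measurable (FM ME (past {x} \<union> (- fut L - {x})))"
        unfolding h1_def by (rule K4[OF gk timebox_single futx hm])
      have h1b: "\<And>z. \<bar>h1 z\<bar> \<le> 1" unfolding h1_def by (rule gk_bound[OF gk hb])
      have h1bd: "bounded (range h1)" using h1b unfolding bounded_iff by auto
      have sub1: "past {x} \<union> (- fut L - {x}) \<subseteq> - (fut L' \<union> fut L)"
        using Tx_sub[OF gk tb xm pkL'[unfolded L'_def]] past_fut_in[OF gk tb xL] unfolding L'_def by auto
      have h1m': "h1 \<in> borel_measurable (FM ME (- (fut L' \<union> fut L)))" by (rule measurable_FM_mono[OF sub1 h1m])
      define h2 where "h2 = (\<lambda>\<sigma>. \<integral>\<xi>. h1 \<xi> \<partial>gam ME g L' \<sigma>)"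
      have sub1': "past {x} \<union> (- fut L - {x}) \<subseteq> - fut L'" using sub1 by auto
      have h2m: "h2 \<in> borel_measurable (FM ME (past L' \<union> ((past {x} \<union> (- fut L - {x})) - L')))"
        unfolding h2_def by (rule K4[OF pkL' tb' sub1' h1m])
      have sub2: "past L' \<union> ((past {x} \<union> (- fut L - {x})) - L') \<subseteq> past L \<union> outer L"
        using T3[OF tb xm] T7[of L] xL unfolding L'_def past_def by auto
      have h2po: "h2 \<in> borel_measurable (FM ME (past L \<union> outer L))" by (rule measurable_FM_mono[OF sub2 h2m])
      have "measure (\<gamma>' L \<omega>) A = (\<integral>\<xi>. h \<xi> \<partial>\<gamma>' L \<omega>)"
        unfolding h_def using pk_space[OF pk' tb] by simp
      also have "\<dots> = (\<integral>\<sigma>. h1 \<sigma> \<partial>\<gamma>' L \<omega>)"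
      proof -
        have "(\<integral>\<sigma>. (\<integral>\<xi>. h \<xi> \<partial>\<gamma>' {x} \<sigma>) \<partial>\<gamma>' L \<omega>) = (\<integral>\<xi>. h \<xi> \<partial>\<gamma>' L \<omega>)"
          by (rule cons[OF timebox_single tb _ hm1 hbd]) (use xL in auto)
        then show ?thesis unfolding h1_def single by simp
      qed
      also have "\<dots> = (\<integral>\<sigma>. h2 \<sigma> \<partial>\<gamma>' L \<omega>)"
        using cons[of L' L h1 \<omega>] tb' tb h1m' h1bd IH unfolding h2_def L'_def by auto
      also have "\<dots> = h2 \<omega>" by (rule pk_integral_const[OF pk' tb h2po])
      also have "\<dots> = (\<integral>\<xi>. h \<xi> \<partial>gam ME g L \<omega>)"
        unfolding h2_def h1_def L'_def by (rule gam_int[OF gk tb xm hm hb, symmetric])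
      also have "\<dots> = measure (gam ME g L \<omega>) A"
        unfolding h_def using pk_space[OF pk tb] by simp
      finally show "measure (\<gamma>' L \<omega>) A = measure (gam ME g L \<omega>) A" .
    qed
  qed
qed

end


lemma cons_fun:
  fixes h :: "('s::order \<Rightarrow> 'e) \<Rightarrow> real"
  assumes spME: "space ME = UNIV" and mu: "prob_space \<mu>" and smu: "sets \<mu> = sets (OmegaM ME)"
    and pk: "proper_kernel ME L k" and tb: "timebox L" and con: "consistent_on ME \<mu> L k"
    and h: "h \<in> borel_measurable (FM ME (- fut L))" and hb: "\<And>z. \<bar>h z\<bar> \<le> B"
  shows "(\<integral>\<sigma>. (\<integral>z. h z \<partial>k \<sigma>) \<partial>\<mu>) = (\<integral>z. h z \<partial>\<mu>)"
proof -
  interpret prob_space \<mu> by (rule mu)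
  have spmu: "space \<mu> = UNIV" using sets_eq_imp_space_eq[OF smu] space_OmegaM[OF spME] by simp
  have FO: "sets (FM ME U) \<subseteq> sets \<mu>" for U using sets_FM_OmegaM[OF spME] smu by auto
  have V: "- fut L \<subseteq> - fut L" by simp
  have Km: "(\<lambda>\<sigma>. rk ME (k \<sigma>) (- fut L)) \<in> measurable \<mu> (subprob_algebra (FM ME (- fut L)))"
    by (rule measurable_FM_into[OF FO spmu K3[OF pk tb V]])
  have sub: "subalgebra \<mu> (FM ME (- fut L))" unfolding subalgebra_def using FO spmu by auto
  define \<nu> where "\<nu> = restr_to_subalg \<mu> (FM ME (- fut L))"
  have eqm: "bind \<mu> (\<lambda>\<sigma>. rk ME (k \<sigma>) (- fut L)) = \<nu>"
  proof (rule measure_eqI)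
    have s1: "sets (bind \<mu> (\<lambda>\<sigma>. rk ME (k \<sigma>) (- fut L))) = sets (FM ME (- fut L))"
      by (rule sets_bind) (auto simp: rk_sets[OF pk tb V] spmu)
    show "sets (bind \<mu> (\<lambda>\<sigma>. rk ME (k \<sigma>) (- fut L))) = sets \<nu>"
      unfolding s1 \<nu>_def sets_restr_to_subalg[OF sub] ..
    fix A assume "A \<in> sets (bind \<mu> (\<lambda>\<sigma>. rk ME (k \<sigma>) (- fut L)))"
    then have A: "A \<in> sets (FM ME (- fut L))" using s1 by simp
    have mA: "(\<lambda>\<sigma>. measure (k \<sigma>) A) \<in> borel_measurable \<mu>"
      by (rule measurable_FM_into[OF FO spmu pk_b[OF pk tb A]])
    have intA: "integrable \<mu> (\<lambda>\<sigma>. measure (k \<sigma>) A)"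
    proof (rule integrable_const_bound[where B=1])
      show "AE x in \<mu>. norm (measure (k x) A) \<le> 1"
        using prob_space.prob_le_1[OF pk_prob[OF pk tb]] by simp
    qed (rule mA)
    have "emeasure (bind \<mu> (\<lambda>\<sigma>. rk ME (k \<sigma>) (- fut L))) A = (\<integral>\<^sup>+\<sigma>. emeasure (rk ME (k \<sigma>) (- fut L)) A \<partial>\<mu>)"
      by (rule emeasure_bind[OF _ Km A]) (simp add: spmu)
    also have "\<dots> = (\<integral>\<^sup>+\<sigma>. ennreal (measure (k \<sigma>) A) \<partial>\<mu>)"
      using rk_emeasure[OF pk tb V A] prob_emeasure[OF pk_prob[OF pk tb]] by simp
    also have "\<dots> = ennreal (\<integral>\<sigma>. measure (k \<sigma>) A \<partial>\<mu>)"
      by (rule nn_integral_eq_integral[OF intA]) simp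
    also have "\<dots> = ennreal (measure \<mu> A)" using con A unfolding consistent_on_def by simp
    also have "\<dots> = emeasure \<nu> A"
      unfolding \<nu>_def emeasure_restr_to_subalg[OF sub A] by (simp add: emeasure_eq_measure)
    finally show "emeasure (bind \<mu> (\<lambda>\<sigma>. rk ME (k \<sigma>) (- fut L))) A = emeasure \<nu> A" .
  qed
  have "(\<integral>z. h z \<partial>bind \<mu> (\<lambda>\<sigma>. rk ME (k \<sigma>) (- fut L))) = (\<integral>\<sigma>. (\<integral>z. h z \<partial>rk ME (k \<sigma>) (- fut L)) \<partial>\<mu>)"
  proof (rule integral_bind[where K="FM ME (- fut L)" and B=B and B'=1])
    show "h \<in> borel_measurable (FM ME (- fut L))" by (rule h)
    show "(\<lambda>\<sigma>. rk ME (k \<sigma>) (- fut L)) \<in> measurable \<mu> (subprob_algebra (FM ME (- fut L)))" by (rule Km)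
    show "\<And>z. z \<in> space (FM ME (- fut L)) \<Longrightarrow> \<bar>h z\<bar> \<le> B" using hb by auto
    show "finite_measure \<mu>" by unfold_locales
    show "AE z in \<mu>. emeasure (rk ME (k z) (- fut L)) (space (rk ME (k z) (- fut L))) \<le> ennreal 1"
      using prob_space.emeasure_space_1[OF rk_prob[OF pk tb V]] by simp
  qed
  also have "\<dots> = (\<integral>\<sigma>. (\<integral>z. h z \<partial>k \<sigma>) \<partial>\<mu>)"
    using rk_integral[OF pk tb V h] by simp
  finally have e1: "(\<integral>z. h z \<partial>\<nu>) = (\<integral>\<sigma>. (\<integral>z. h z \<partial>k \<sigma>) \<partial>\<mu>)" using eqm by simp
  have "(\<integral>z. h z \<partial>\<nu>) = (\<integral>z. h z \<partial>\<mu>)" unfolding \<nu>_def by (rule integral_subalgebra2[OF sub h])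
  then show ?thesis using e1 by simp
qed

context
  fixes ME :: "'e measure" and g :: "'s::order \<Rightarrow> ('s \<Rightarrow> 'e) \<Rightarrow> ('s \<Rightarrow> 'e) measure"
  assumes gk: "\<And>x. proper_kernel ME {x} (g x)" and spME: "space ME = UNIV"
begin

lemma gibbs_sup:
  assumes mu: "prob_space \<mu>" and smu: "sets \<mu> = sets (OmegaM ME)"
    and cx: "\<And>x. consistent_on ME \<mu> {x} (g x)"
  shows "timebox L \<Longrightarrow> consistent_on ME \<mu> L (gam ME g L)"
proof (induction "card L" arbitrary: L rule: less_induct)
  case less
  note tb = less.prems
  interpret prob_space \<mu> by (rule mu)
  have spmu: "space \<mu> = UNIV" using sets_eq_imp_space_eq[OF smu] space_OmegaM[OF spME] by simp
  have FO: "sets (FM ME U) \<subseteq> sets \<mu>" for U using sets_FM_OmegaM[OF spME] smu by auto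
  show ?case
  proof (cases "L = {}")
    case True
    show ?thesis unfolding consistent_on_def
    proof
      fix A assume A: "A \<in> sets (FM ME (- fut L))"
      then have A': "A \<in> sets (FM ME UNIV)" using True by (simp add: empty_sets)
      have "(\<integral>\<sigma>. measure (gam ME g L \<sigma>) A \<partial>\<mu>) = (\<integral>\<sigma>. indicator A \<sigma> \<partial>\<mu>)"
        unfolding True gam_empty using measure_return[OF A'] by simp
      also have "\<dots> = measure \<mu> A" using spmu by simp
      finally show "(\<integral>\<sigma>. measure (gam ME g L \<sigma>) A \<partial>\<mu>) = measure \<mu> A" .
    qed
  next
    case False
    have fin: "finite L" using tb unfolding timebox_def by auto
    define x where "x = cm L"
    have xm: "x \<in> maxs L" unfolding x_def by (rule cm_maxs[OF fin False])
    have xL: "x \<in> L" using xm maxsD by auto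
    define L' where "L' = L - {x}"
    have tb': "timebox L'" unfolding L'_def by (rule T1[OF tb xm])
    have cL: "card L' < card L" unfolding L'_def using fin xL by (rule card_Diff1_less)
    have IH: "consistent_on ME \<mu> L' (gam ME g L')" by (rule less.hyps[OF cL tb'])
    have pkL': "proper_kernel ME L' (gam ME g L')" by (rule gam_proper[OF gk tb'])
    show ?thesis unfolding consistent_on_def
    proof
      fix A assume A: "A \<in> sets (FM ME (- fut L))"
      have futx: "- fut L \<subseteq> - fut {x}" using T4[OF tb xm] by auto
      have Ax: "A \<in> sets (FM ME (- fut {x}))" using A FM_mono[OF futx] by auto
      define f where "f = (\<lambda>\<tau>. measure (g x \<tau>) A)"
      have fm: "f \<in> borel_measurable (FM ME (past {x} \<union> (- fut L - {x})))"
        unfolding f_def by (rule K4m[OF gk timebox_single futx A])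
      have fm': "f \<in> borel_measurable (FM ME (- fut L'))"
        using measurable_FM_mono[OF Tx_sub[OF gk tb xm pkL'[unfolded L'_def]] fm] unfolding L'_def .
      have fb: "\<And>z. \<bar>f z\<bar> \<le> 1" unfolding f_def using prob_space.prob_le_1[OF pk_prob[OF gk timebox_single]] by simp
      have "(\<integral>\<sigma>. measure (gam ME g L \<sigma>) A \<partial>\<mu>) = (\<integral>\<sigma>. (\<integral>\<tau>. f \<tau> \<partial>gam ME g L' \<sigma>) \<partial>\<mu>)"
        unfolding f_def L'_def DEC[OF gk tb xm] comp_measure[OF gk tb xm pkL'[unfolded L'_def] A] ..
      also have "\<dots> = (\<integral>\<tau>. f \<tau> \<partial>\<mu>)"
        by (rule cons_fun[OF spME mu smu pkL' tb' IH fm' fb])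
      also have "\<dots> = measure \<mu> A" using cx[of x] Ax unfolding consistent_on_def f_def by simp
      finally show "(\<integral>\<sigma>. measure (gam ME g L \<sigma>) A \<partial>\<mu>) = measure \<mu> A" .
    qed
  qed
qed

lemma gibbs_eq: "Gibbs ME (gam ME g) = {\<mu>. prob_space \<mu> \<and> sets \<mu> = sets (OmegaM ME) \<and> (\<forall>x. consistent_on ME \<mu> {x} (g x))}"
proof (intro set_eqI iffI)
  fix \<mu> assume "\<mu> \<in> Gibbs ME (gam ME g)"
  then show "\<mu> \<in> {\<mu>. prob_space \<mu> \<and> sets \<mu> = sets (OmegaM ME) \<and> (\<forall>x. consistent_on ME \<mu> {x} (g x))}"
  proof -
    have "prob_space \<mu>" "sets \<mu> = sets (OmegaM ME)" "\<And>L. timebox L \<Longrightarrow> consistent_on ME \<mu> L (gam ME g L)"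
      using \<open>\<mu> \<in> Gibbs ME (gam ME g)\<close> unfolding Gibbs_def by auto
    then show ?thesis using timebox_single[of x for x] gam_single[OF gk] by force
  qed
next
  fix \<mu> assume "\<mu> \<in> {\<mu>. prob_space \<mu> \<and> sets \<mu> = sets (OmegaM ME) \<and> (\<forall>x. consistent_on ME \<mu> {x} (g x))}"
  then show "\<mu> \<in> Gibbs ME (gam ME g)"
    unfolding Gibbs_def using gibbs_sup by auto
qed

end

theorem mainTheorem3:
  fixes ME :: "'e::countable measure"
    and g :: "'s::{order,countable} \<Rightarrow> ('s \<Rightarrow> 'e) \<Rightarrow> ('s \<Rightarrow> 'e) measure"
  assumes "standing TYPE('s)"
    and "space ME = UNIV"
    and "\<forall>x. proper_kernel ME {x} (g x)"
  shows "\<exists>\<gamma>. POS ME \<gamma> \<and> (\<forall>x. \<gamma> {x} = g x) \<and>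
           (\<forall>\<gamma>'. POS ME \<gamma>' \<and> (\<forall>x. \<gamma>' {x} = g x) \<longrightarrow> (\<forall>L. timebox L \<longrightarrow> \<gamma>' L = \<gamma> L)) \<and>
           Gibbs ME \<gamma> = {\<mu>. prob_space \<mu> \<and> sets \<mu> = sets (OmegaM ME) \<and>
                            (\<forall>x. consistent_on ME \<mu> {x} (g x))}"
proof (intro exI[of _ "gam ME g"] conjI allI impI)
  have gk: "\<And>x. proper_kernel ME {x} (g x)" using assms(3) by auto
  show "POS ME (gam ME g)" by (rule POS_gam[OF gk])
  show "\<And>x. gam ME g {x} = g x" by (rule gam_single[OF gk])
  show "\<And>\<gamma>' L. POS ME \<gamma>' \<and> (\<forall>x. \<gamma>' {x} = g x) \<Longrightarrow> timebox L \<Longrightarrow> \<gamma>' L = gam ME g L"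
    using UNIQ[OF gk] by blast
  show "Gibbs ME (gam ME g) = {\<mu>. prob_space \<mu> \<and> sets \<mu> = sets (OmegaM ME) \<and> (\<forall>x. consistent_on ME \<mu> {x} (g x))}"
    by (rule gibbs_eq[OF gk assms(2)])
qed


end
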